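(* For every positive integer $N>1$, \[ \mathfrak{C}_2(N) = K(2N)^5 + O(N^4\log N), \qquad \text{where } K = \frac{10\zeta(2)}{3\zeta(3)}, \] and the implied constant is absolute.
   Context: For positive integers $d,N$, let $\mathrm{Mat}_d(\mathbb{Z},N)$ denote the set of $d\times d$ matrices with all entries in $[-N,N]\cap\mathbb{Z}$, and let $\mathfrak{C}_d(N)$ be the number of pairs $(A,B)\in \mathrm{Mat}_d(\mathbb{Z},N)^2$ with $AB=BA$. Here $\zeta$ is the Riemann zeta function. *)

theory Defs
  imports "HOL-Analysis.Analysis"
begin

definition zeta_real :: "real \<Rightarrow> real" where
  "zeta_real s = (\<Sum>n. 1 / (real (Suc n)) powr s)"

definition bounded_mats :: "nat \<Rightarrow> (int ^ 'd ^ 'd) set" where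
  "bounded_mats N = {A. \<forall>i j. \<bar>A $ i $ j\<bar> \<le> int N}"

definition commuting_count :: "('d::finite) itself \<Rightarrow> nat \<Rightarrow> nat" where
  "commuting_count _ N =
     card {(A, B). A \<in> (bounded_mats N :: (int ^ 'd ^ 'd) set) \<and> B \<in> bounded_mats N \<and> A ** B = B ** A}"

end

theory Submission
  imports Defs "HOL-Analysis.Harmonic_Numbers"
begin

definition fk :: "nat \<Rightarrow> nat \<Rightarrow> real" where
  "fk k l = 1 / real (max k l) ^ 3 - real (min k l) / (3 * real (max k l) ^ 4)"
definition hj :: "nat \<Rightarrow> real" where
  "hj j = 5 / (3 * real j ^ 2) - 1 / real j ^ 3"
definition Dj :: "nat \<Rightarrow> (nat \<times> nat) set" where
  "Dj j = {(k,l). 1 \<le> k \<and> 1 \<le> l \<and> max k l = j}"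

lemma Dj_eq: "1 \<le> j \<Longrightarrow> Dj j = ({1..<j} \<times> {j}) \<union> (({j} \<times> {1..<j}) \<union> {(j,j)})"
  unfolding Dj_def by (auto simp: max_def split: if_splits)

lemma finite_Dj: "finite (Dj j)"
proof -
  have "Dj j \<subseteq> {0..j} \<times> {0..j}" unfolding Dj_def by auto
  then show ?thesis by (rule finite_subset) auto
qed

lemma sum_Dj:
  assumes "1 \<le> j"
  shows "sum g (Dj j) = (\<Sum>k\<in>{1..<j}. g (k,j)) + (\<Sum>k\<in>{1..<j}. g (j,k)) + g (j,j)"
proof -
  have a: "sum g ({1..<j} \<times> {j}) = (\<Sum>k\<in>{1..<j}. g (k,j))"
  proof -
    have "{1..<j} \<times> {j} = (\<lambda>k. (k,j)) ` {1..<j}" by auto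
    then show ?thesis by (simp add: sum.reindex inj_on_def)
  qed
  have b: "sum g ({j} \<times> {1..<j}) = (\<Sum>k\<in>{1..<j}. g (j,k))"
  proof -
    have "{j} \<times> {1..<j} = (\<lambda>k. (j,k)) ` {1..<j}" by auto
    then show ?thesis by (simp add: sum.reindex inj_on_def)
  qed
  have "sum g (Dj j) = sum g ({1..<j} \<times> {j}) + sum g (({j} \<times> {1..<j}) \<union> {(j,j)})"
    unfolding Dj_eq[OF assms] by (rule sum.union_disjoint) auto
  also have "sum g (({j} \<times> {1..<j}) \<union> {(j,j)}) = sum g ({j} \<times> {1..<j}) + g (j,j)"
    by (subst sum.union_disjoint) auto
  finally show ?thesis using a b by (simp add: add.assoc)
qed

lemma sum_real_upto: "(\<Sum>k\<in>{1..<j}. real k) = real j * (real j - 1) / 2"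
proof (induction j)
  case 0 then show ?case by simp
next
  case (Suc j)
  show ?case
  proof (cases "j = 0")
    case True then show ?thesis by simp
  next
    case False
    then have "{1..<Suc j} = insert j {1..<j}" by auto
    then show ?thesis using Suc by (simp add: field_simps)
  qed
qed

lemma fk_nonneg: "1 \<le> k \<Longrightarrow> 1 \<le> l \<Longrightarrow> 0 \<le> fk k l"
proof -
  assume "1 \<le> k" "1 \<le> l"
  define c where "c = real (max k l)"
  define m where "m = real (min k l)"
  have c1: "c \<ge> 1" using \<open>1 \<le> k\<close> unfolding c_def by simp
  have mc: "m \<le> c" unfolding c_def m_def by simp
  have "m / (3 * c ^ 4) \<le> c / (3 * c ^ 4)" using mc c1 by (simp add: divide_right_mono)
  also have "\<dots> = 1 / (3 * c ^ 3)" using c1 by (simp add: power_eq_if)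
  also have "\<dots> \<le> 1 / c ^ 3" using c1 by (simp add: frac_le)
  finally show ?thesis unfolding fk_def c_def[symmetric] m_def[symmetric] by simp
qed

lemma fk_le: "1 \<le> k \<Longrightarrow> 1 \<le> l \<Longrightarrow> fk k l \<le> 1 / real (max k l) ^ 3"
  unfolding fk_def by simp

lemma sum_Dj_fk:
  assumes "1 \<le> j"
  shows "(\<Sum>(k,l)\<in>Dj j. fk k l) = hj j"
proof -
  have "(\<Sum>(k,l)\<in>Dj j. fk k l) = (\<Sum>k\<in>{1..<j}. fk k j) + (\<Sum>k\<in>{1..<j}. fk j k) + fk j j"
    using sum_Dj[OF assms, of "\<lambda>(k,l). fk k l"] by simp
  also have "(\<Sum>k\<in>{1..<j}. fk k j) = (\<Sum>k\<in>{1..<j}. 1 / real j ^ 3 - real k / (3 * real j ^ 4))"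
    by (rule sum.cong) (auto simp: fk_def max_def min_def)
  also have "(\<Sum>k\<in>{1..<j}. fk j k) = (\<Sum>k\<in>{1..<j}. 1 / real j ^ 3 - real k / (3 * real j ^ 4))"
    by (rule sum.cong) (auto simp: fk_def max_def min_def)
  also have "(\<Sum>k\<in>{1..<j}. 1 / real j ^ 3 - real k / (3 * real j ^ 4))
      = real (j - 1) / real j ^ 3 - (real j * (real j - 1) / 2) / (3 * real j ^ 4)"
  proof -
    have "(\<Sum>k\<in>{1..<j}. 1 / real j ^ 3 - real k / (3 * real j ^ 4))
       = (\<Sum>k\<in>{1..<j}. 1 / real j ^ 3) - (\<Sum>k\<in>{1..<j}. real k) / (3 * real j ^ 4)"
      by (simp add: sum_subtractf sum_divide_distrib)
    also have "\<dots> = real (j - 1) / real j ^ 3 - (real j * (real j - 1) / 2) / (3 * real j ^ 4)"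
      by (subst sum_real_upto) simp
    finally show ?thesis .
  qed
  also have "(real (j - 1) / real j ^ 3 - (real j * (real j - 1) / 2) / (3 * real j ^ 4))
     + (real (j - 1) / real j ^ 3 - (real j * (real j - 1) / 2) / (3 * real j ^ 4)) + fk j j = hj j"
  proof -
    have j0: "real j > 0" using assms by simp
    have "fk j j = 2 / (3 * real j ^ 3)" unfolding fk_def using j0 by (simp add: field_simps power_eq_if)
    then show ?thesis unfolding hj_def using j0 assms by (simp add: of_nat_diff field_simps power_eq_if)
  qed
  finally show ?thesis .
qed

lemma zeta_has_sum:
  assumes "s \<ge> 2"
  shows "((\<lambda>j::nat. 1 / real j ^ s) has_sum zeta_real (real s)) {1..}"
proof -
  have sm: "summable (\<lambda>n. 1 / real (Suc n) ^ s)"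
    using inverse_power_summable[OF assms, where 'a=real] summable_Suc_iff[of "\<lambda>n. inverse (real n ^ s)"]
    by (simp add: divide_inverse)
  have eq: "(\<lambda>n. 1 / real (Suc n) powr real s) = (\<lambda>n. 1 / real (Suc n) ^ s)"
    by (simp add: powr_realpow)
  have "(\<lambda>n. 1 / real (Suc n) ^ s) sums zeta_real (real s)"
    unfolding zeta_real_def eq using sm summable_sums by blast
  then have "((\<lambda>n. 1 / real (Suc n) ^ s) has_sum zeta_real (real s)) UNIV"
    by (rule sums_nonneg_imp_has_sum) simp
  moreover have "bij_betw Suc UNIV {1::nat..}"
    by (rule bij_betwI[where g="\<lambda>n. n - 1"]) auto
  ultimately show ?thesis
    using has_sum_reindex_bij_betw[of Suc UNIV "{1::nat..}" "\<lambda>j. 1 / real j ^ s"] by simp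
qed

definition UU :: "(nat \<times> nat) set" where "UU = {(k,l). 1 \<le> k \<and> 1 \<le> l}"
definition Cop :: "(nat \<times> nat) set" where "Cop = {(k,l). 1 \<le> k \<and> 1 \<le> l \<and> coprime k l}"

definition z2 :: real where "z2 = zeta_real 2"
definition z3 :: real where "z3 = zeta_real 3"

lemma z2_has_sum: "((\<lambda>j::nat. 1 / real j ^ 2) has_sum z2) {1..}"
  using zeta_has_sum[of 2] unfolding z2_def by simp
lemma z3_has_sum: "((\<lambda>j::nat. 1 / real j ^ 3) has_sum z3) {1..}"
  using zeta_has_sum[of 3] unfolding z3_def by simp

lemma z3_pos: "z3 > 0"
proof -
  have "((\<lambda>j::nat. 1 / real j ^ 3) has_sum (\<Sum>j\<in>{1}. 1 / real j ^ 3)) {1}" by (rule has_sum_finite) simp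
  then have "(\<Sum>j\<in>{1::nat}. 1 / real j ^ 3) \<le> z3"
    by (rule has_sum_mono_neutral[OF _ z3_has_sum]) auto
  then show ?thesis by simp
qed

lemma hj_has_sum: "(hj has_sum (5/3 * z2 - z3)) {1..}"
proof -
  have "((\<lambda>j::nat. 5/3 * (1 / real j ^ 2) + (-1) * (1 / real j ^ 3)) has_sum (5/3 * z2 + (-1) * z3)) {1..}"
    by (intro has_sum_add has_sum_cmult_right z2_has_sum z3_has_sum)
  moreover have "\<And>j. 5/3 * (1 / real j ^ 2) + (-1) * (1 / real j ^ 3) = hj j"
    unfolding hj_def by simp
  ultimately show ?thesis by simp
qed

lemma fk_has_sum_UU: "((\<lambda>(k,l). fk k l) has_sum (5/3 * z2 - z3)) UU"
proof -
  define G where "G = (\<lambda>(j::nat, q::nat\<times>nat). fk (fst q) (snd q))"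
  have inner: "((\<lambda>q. G (j, q)) has_sum hj j) (Dj j)" if "j \<in> {1..}" for j
  proof -
    have "((\<lambda>q. G (j, q)) has_sum (\<Sum>q\<in>Dj j. G (j,q))) (Dj j)"
      by (rule has_sum_finite) (rule finite_Dj)
    moreover have "(\<Sum>q\<in>Dj j. G (j,q)) = hj j"
      using sum_Dj_fk[of j] that unfolding G_def by (simp add: case_prod_beta)
    ultimately show ?thesis by simp
  qed
  have nn: "G (j, q) \<ge> 0" if "j \<in> {1..}" "q \<in> Dj j" for j q
    using that fk_nonneg unfolding G_def Dj_def by auto
  have sG: "G summable_on Sigma {1..} Dj"
    by (rule summable_on_SigmaI[OF inner _ nn]) (use hj_has_sum in \<open>auto simp: summable_on_def\<close>)
  then have hG: "(G has_sum infsum G (Sigma {1..} Dj)) (Sigma {1..} Dj)" by simp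
  have "(hj has_sum infsum G (Sigma {1..} Dj)) {1..}"
    by (rule has_sum_SigmaD[OF hG inner])
  then have "infsum G (Sigma {1..} Dj) = 5/3 * z2 - z3"
    using hj_has_sum has_sum_unique by blast
  with hG have hG': "(G has_sum (5/3 * z2 - z3)) (Sigma {1..} Dj)" by simp
  have bij: "bij_betw snd (Sigma {1..} Dj) UU"
    by (rule bij_betwI[where g="\<lambda>q. (max (fst q) (snd q), q)"]) (auto simp: Dj_def UU_def)
  have "G = (\<lambda>x. (\<lambda>(k,l). fk k l) (snd x))" unfolding G_def by (auto simp: case_prod_beta)
  then show ?thesis using hG' has_sum_reindex_bij_betw[OF bij, of "\<lambda>(k,l). fk k l"] by simp
qed

lemma fk_summable_UU: "(\<lambda>(k,l). fk k l) summable_on UU"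
  using fk_has_sum_UU summable_on_def by blast

lemma fk_summable_Cop: "(\<lambda>(k,l). fk k l) summable_on Cop"
  by (rule summable_on_subset_banach[OF fk_summable_UU]) (auto simp: Cop_def UU_def)

definition Scop :: real where "Scop = infsum (\<lambda>(k,l). fk k l) Cop"

lemma fk_scale:
  fixes e k l :: nat
  assumes e: "1 \<le> e"
  shows "fk (e*k) (e*l) = fk k l / real e ^ 3"
proof -
  have mm: "max (e*k) (e*l) = e * max k l" "min (e*k) (e*l) = e * min k l"
    by (simp_all add: max_def min_def)
  have e4: "real e ^ 4 = real e * real e ^ 3" by (simp add: eval_nat_numeral)
  have ep: "real e > 0" using e by simp
  show ?thesis unfolding fk_def mm using ep
    by (simp add: power_mult_distrib e4 field_simps)
qed

lemma Scop_eq: "z3 * Scop = 5/3 * z2 - z3"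
proof -
  define F where "F = (\<lambda>(e::nat, q::nat\<times>nat). fk (fst q) (snd q) / real e ^ 3)"
  have hc: "((\<lambda>(k,l). fk k l) has_sum Scop) Cop"
    unfolding Scop_def using fk_summable_Cop by simp
  have inner: "((\<lambda>q. F (e, q)) has_sum (Scop / real e ^ 3)) Cop" if "e \<in> {1..}" for e
  proof -
    have "((\<lambda>q. (1 / real e ^ 3) * (\<lambda>(k,l). fk k l) q) has_sum ((1 / real e ^ 3) * Scop)) Cop"
      by (rule has_sum_cmult_right[OF hc])
    then show ?thesis unfolding F_def by (simp add: case_prod_beta)
  qed
  have outer: "((\<lambda>e::nat. Scop / real e ^ 3) has_sum (Scop * z3)) {1..}"
  proof -
    have "((\<lambda>e::nat. Scop * (1 / real e ^ 3)) has_sum (Scop * z3)) {1..}"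
      by (rule has_sum_cmult_right[OF z3_has_sum])
    then show ?thesis by simp
  qed
  have nn: "F (e, q) \<ge> 0" if "e \<in> {1..}" "q \<in> Cop" for e q
    using that fk_nonneg unfolding F_def Cop_def by auto
  have sF: "F summable_on Sigma {1..} (\<lambda>_. Cop)"
    by (rule summable_on_SigmaI[OF inner _ nn]) (use outer in \<open>auto simp: summable_on_def\<close>)
  then have hF: "(F has_sum infsum F (Sigma {1..} (\<lambda>_. Cop))) (Sigma {1..} (\<lambda>_. Cop))" by simp
  have "((\<lambda>e::nat. Scop / real e ^ 3) has_sum infsum F (Sigma {1..} (\<lambda>_. Cop))) {1..}"
    by (rule has_sum_SigmaD[OF hF inner])
  then have "infsum F (Sigma {1..} (\<lambda>_. Cop)) = Scop * z3"
    using outer has_sum_unique by blast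
  with hF have hF': "(F has_sum (Scop * z3)) (Sigma {1..} (\<lambda>_. Cop))" by simp
  have "((\<lambda>(k,l). fk k l) has_sum (Scop * z3)) UU"
  proof -
    have "(F has_sum (Scop * z3)) (Sigma {1..} (\<lambda>_. Cop)) = ((\<lambda>(k,l). fk k l) has_sum (Scop * z3)) UU"
    proof (rule has_sum_reindex_bij_witness[where j="\<lambda>(e,q). (e * fst q, e * snd q)"
          and i="\<lambda>(k,l). (gcd k l, (k div gcd k l, l div gcd k l))"])
      fix a :: "nat \<times> (nat \<times> nat)" assume "a \<in> Sigma {1..} (\<lambda>_. Cop)"
      then obtain e k l where a: "a = (e,(k,l))" "e \<ge> 1" "k \<ge> 1" "l \<ge> 1" "coprime k l"
        by (auto simp: Cop_def)
      have g: "gcd (e*k) (e*l) = e" using a by (simp add: gcd_mult_distrib_nat[symmetric])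
      show "(\<lambda>(k,l). (gcd k l, (k div gcd k l, l div gcd k l))) ((\<lambda>(e,q). (e * fst q, e * snd q)) a) = a"
        using a g by simp
      show "(\<lambda>(e,q). (e * fst q, e * snd q)) a \<in> UU" using a by (simp add: UU_def)
      show "(\<lambda>(k, l). fk k l) ((\<lambda>(e,q). (e * fst q, e * snd q)) a) = F a"
        using a fk_scale unfolding F_def by simp
    next
      fix b :: "nat \<times> nat" assume "b \<in> UU"
      then obtain k l where b: "b = (k,l)" "k \<ge> 1" "l \<ge> 1" by (auto simp: UU_def)
      have gp: "gcd k l > 0" using b by simp
      show "(\<lambda>(e,q). (e * fst q, e * snd q)) ((\<lambda>(k,l). (gcd k l, (k div gcd k l, l div gcd k l))) b) = b"
        using b by simp
      have "k div gcd k l \<ge> 1" "l div gcd k l \<ge> 1"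
        using b gp by (auto simp: div_greater_zero_iff gcd_le1_nat gcd_le2_nat Suc_le_eq)
      moreover have "coprime (k div gcd k l) (l div gcd k l)"
        by (rule div_gcd_coprime) (use b in auto)
      ultimately show "(\<lambda>(k,l). (gcd k l, (k div gcd k l, l div gcd k l))) b \<in> Sigma {1..} (\<lambda>_. Cop)"
        using b gp by (simp add: Cop_def Suc_le_eq)
    qed simp
    then show ?thesis using hF' by simp
  qed
  then have "Scop * z3 = 5/3 * z2 - z3" using fk_has_sum_UU has_sum_unique by blast
  then show ?thesis by (simp add: mult.commute)
qed

definition Ann :: "nat \<Rightarrow> nat \<Rightarrow> (nat \<times> nat) set" where
  "Ann J L = {(k,l). 1 \<le> k \<and> 1 \<le> l \<and> J < max k l \<and> max k l \<le> L}"

lemma finite_Ann: "finite (Ann J L)"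
proof -
  have "Ann J L \<subseteq> {0..L} \<times> {0..L}" unfolding Ann_def by auto
  then show ?thesis by (rule finite_subset) auto
qed

lemma sum_Ann: "sum g (Ann J L) = (\<Sum>j\<in>{J<..L}. sum g (Dj j))"
proof -
  have "(\<Sum>j\<in>{J<..L}. sum g {x \<in> Ann J L. (\<lambda>(k,l). max k l) x = j}) = sum g (Ann J L)"
    by (rule sum.group[OF finite_Ann]) (auto simp: Ann_def)
  moreover have "{x \<in> Ann J L. (\<lambda>(k,l). max k l) x = j} = Dj j" if "j \<in> {J<..L}" for j
    using that by (auto simp: Ann_def Dj_def)
  ultimately show ?thesis by simp
qed

lemma Ann0: "Ann 0 L = {1..L} \<times> {1..L}"
  unfolding Ann_def by auto

lemma card_Dj: "1 \<le> j \<Longrightarrow> real (card (Dj j)) = 2 * real j - 1"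
  using sum_Dj[of j "\<lambda>_. (1::real)"] by (simp add: of_nat_diff)

lemma sum_inv_sq_tail: "J \<ge> 1 \<Longrightarrow> J \<le> L \<Longrightarrow> (\<Sum>j\<in>{J<..L}. 1 / real j ^ 2) \<le> 1 / real J - 1 / real L"
proof (induction L)
  case 0 then show ?case by simp
next
  case (Suc L)
  show ?case
  proof (cases "J = Suc L")
    case True then show ?thesis by simp
  next
    case False
    then have JL: "J \<le> L" using Suc by simp
    have "{J<..Suc L} = insert (Suc L) {J<..L}" using JL by auto
    then have "(\<Sum>j\<in>{J<..Suc L}. 1 / real j ^ 2) = 1 / real (Suc L) ^ 2 + (\<Sum>j\<in>{J<..L}. 1 / real j ^ 2)"
      by simp
    also have "\<dots> \<le> 1 / real (Suc L) ^ 2 + (1 / real J - 1 / real L)"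
      using Suc JL by simp
    also have "\<dots> \<le> 1 / real J - 1 / real (Suc L)"
    proof -
      have L1: "real L \<ge> 1" using JL Suc.prems by simp
      have e: "1 / real L - 1 / real (Suc L) = 1 / (real L * real (Suc L))"
        using L1 by (simp add: field_simps)
      have "real L * real (Suc L) \<le> real (Suc L) ^ 2" by (simp add: power2_eq_square)
      then have "1 / real (Suc L) ^ 2 \<le> 1 / (real L * real (Suc L))"
        using L1 by (intro divide_left_mono) auto
      then have "1 / real (Suc L) ^ 2 \<le> 1 / real L - 1 / real (Suc L)" using e by simp
      then show ?thesis by simp
    qed
    finally show ?thesis .
  qed
qed

lemma tail_bound:
  assumes J: "J \<ge> 1" and F: "finite F" "F \<subseteq> Cop - {(k,l). max k l \<le> J}"
  shows "(\<Sum>(k,l)\<in>F. fk k l) \<le> 5 / (3 * real J)"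
proof -
  define L where "L = Max (insert J ((\<lambda>(k,l). max k l) ` F))"
  have JL: "J \<le> L" unfolding L_def using F by simp
  have sub: "F \<subseteq> Ann J L"
  proof
    fix x assume x: "x \<in> F"
    then have "(\<lambda>(k,l). max k l) x \<le> L" unfolding L_def using F by (intro Max_ge) auto
    then show "x \<in> Ann J L" using x F by (auto simp: Ann_def Cop_def)
  qed
  have "(\<Sum>(k,l)\<in>F. fk k l) \<le> (\<Sum>(k,l)\<in>Ann J L. fk k l)"
    by (rule sum_mono2[OF finite_Ann sub]) (auto simp: Ann_def intro: fk_nonneg)
  also have "\<dots> = (\<Sum>j\<in>{J<..L}. hj j)"
    unfolding sum_Ann using J by (intro sum.cong refl sum_Dj_fk) auto
  also have "\<dots> \<le> (\<Sum>j\<in>{J<..L}. 5/3 * (1 / real j ^ 2))"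
    by (rule sum_mono) (simp add: hj_def)
  also have "\<dots> = 5/3 * (\<Sum>j\<in>{J<..L}. 1 / real j ^ 2)" by (simp add: sum_distrib_left)
  also have "\<dots> \<le> 5/3 * (1 / real J - 1 / real L)"
    using sum_inv_sq_tail[OF J JL] by simp
  also have "\<dots> \<le> 5 / (3 * real J)" using JL J by simp
  finally show ?thesis .
qed

lemma Scop_split:
  assumes J: "J \<ge> 1"
  shows "0 \<le> Scop - (\<Sum>(k,l)\<in>Cop \<inter> {(k,l). max k l \<le> J}. fk k l)"
    and "Scop - (\<Sum>(k,l)\<in>Cop \<inter> {(k,l). max k l \<le> J}. fk k l) \<le> 5 / (3 * real J)"
proof -
  define A where "A = Cop \<inter> {(k,l). max k l \<le> J}"
  define B where "B = Cop - {(k,l). max k l \<le> J}"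
  have finA: "finite A"
  proof -
    have "A \<subseteq> {0..J} \<times> {0..J}" unfolding A_def by auto
    then show ?thesis by (rule finite_subset) auto
  qed
  have sB: "(\<lambda>(k,l). fk k l) summable_on B"
    by (rule summable_on_subset_banach[OF fk_summable_Cop]) (auto simp: B_def)
  have sA: "(\<lambda>(k,l). fk k l) summable_on A" using finA by simp
  have "Scop = infsum (\<lambda>(k,l). fk k l) (A \<union> B)" unfolding Scop_def A_def B_def
    by (rule arg_cong[where f="infsum _"]) auto
  also have "\<dots> = infsum (\<lambda>(k,l). fk k l) A + infsum (\<lambda>(k,l). fk k l) B"
    by (rule infsum_Un_disjoint[OF sA sB]) (auto simp: A_def B_def)
  also have "infsum (\<lambda>(k,l). fk k l) A = (\<Sum>(k,l)\<in>A. fk k l)" using finA by simp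
  finally have eq: "Scop - (\<Sum>(k,l)\<in>A. fk k l) = infsum (\<lambda>(k,l). fk k l) B" by simp
  have "0 \<le> infsum (\<lambda>(k,l). fk k l) B"
    by (rule infsum_nonneg) (auto simp: B_def Cop_def intro: fk_nonneg)
  then show "0 \<le> Scop - (\<Sum>(k,l)\<in>Cop \<inter> {(k,l). max k l \<le> J}. fk k l)"
    using eq unfolding A_def by simp
  have "infsum (\<lambda>(k,l). fk k l) B \<le> 5 / (3 * real J)"
    by (rule infsum_le_finite_sums[OF sB]) (use tail_bound[OF J] in \<open>auto simp: B_def\<close>)
  then show "Scop - (\<Sum>(k,l)\<in>Cop \<inter> {(k,l). max k l \<le> J}. fk k l) \<le> 5 / (3 * real J)"
    using eq unfolding A_def by simp
qed

lemma box_inv_sq: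
  "(\<Sum>(k,l)\<in>{1..L}\<times>{1..L}. 1 / real (max k l) ^ 2) \<le> 2 * harm L"
proof -
  have "(\<Sum>(k,l)\<in>{1..L}\<times>{1..L}. 1 / real (max k l) ^ 2) = (\<Sum>j\<in>{0<..L}. \<Sum>(k,l)\<in>Dj j. 1 / real (max k l) ^ 2)"
    using sum_Ann[of "\<lambda>(k,l). 1 / real (max k l) ^ 2" 0 L] unfolding Ann0 by simp
  also have "\<dots> = (\<Sum>j\<in>{0<..L}. (2 * real j - 1) / real j ^ 2)"
  proof (rule sum.cong[OF refl])
    fix j assume j: "j \<in> {0<..L}"
    have "(\<Sum>(k,l)\<in>Dj j. 1 / real (max k l) ^ 2) = (\<Sum>(k,l)\<in>Dj j. 1 / real j ^ 2)"
      by (rule sum.cong) (auto simp: Dj_def)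
    also have "\<dots> = real (card (Dj j)) / real j ^ 2" by simp
    finally show "(\<Sum>(k,l)\<in>Dj j. 1 / real (max k l) ^ 2) = (2 * real j - 1) / real j ^ 2"
      using card_Dj[of j] j by simp
  qed
  also have "\<dots> \<le> (\<Sum>j\<in>{0<..L}. 2 * inverse (real j))"
  proof (rule sum_mono)
    fix j assume "j \<in> {0<..L}"
    then have j: "real j \<ge> 1" by simp
    then show "(2 * real j - 1) / real j ^ 2 \<le> 2 * inverse (real j)"
      by (simp add: field_simps power2_eq_square)
  qed
  also have "\<dots> = 2 * harm L"
  proof -
    have "{0<..L} = {1..L}" by auto
    then show ?thesis unfolding harm_def by (simp add: sum_distrib_left)
  qed
  finally show ?thesis .
qed

lemma harm_le_ln: "L \<ge> 1 \<Longrightarrow> harm L \<le> 1 + ln (real L)"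
  using euler_mascheroni_sequence_decreasing[of 1 L] by (simp add: harm_def)

lemma int_le_div_iff:
  fixes b m x :: int
  assumes b: "b > 0"
  shows "x \<le> m div b \<longleftrightarrow> b * x \<le> m"
proof -
  have d: "b * (m div b) + m mod b = m" by simp
  have m0: "0 \<le> m mod b" "m mod b < b" using b by simp_all
  show ?thesis
  proof
    assume "x \<le> m div b"
    then have "b * x \<le> b * (m div b)" using b by simp
    then show "b * x \<le> m" using d m0 by linarith
  next
    assume h: "b * x \<le> m"
    show "x \<le> m div b"
    proof (rule ccontr)
      assume "\<not> x \<le> m div b"
      then have "m div b + 1 \<le> x" by simp
      then have "b * (m div b + 1) \<le> b * x" using b by simp
      then show False using h d m0 by (simp add: algebra_simps)
    qed
  qed
qed

definition tt :: "int \<Rightarrow> int \<Rightarrow> int" where "tt n x = max 0 (2*n+1 - \<bar>x\<bar>)"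
definition TT :: "int \<Rightarrow> int \<Rightarrow> int \<Rightarrow> int" where
  "TT n a b = (\<Sum>x\<in>{-2*n..2*n}. tt n (a*x) * tt n (b*x))"

lemma closed_form:
  fixes M a b :: int
  shows "q \<ge> 0 \<Longrightarrow> 6 * (\<Sum>x\<in>{1..q}. (M - a*x) * (M - b*x))
     = 6*q*M^2 - 3*(a+b)*M*q*(q+1) + a*b*q*(q+1)*(2*q+1)"
proof (induction q rule: int_ge_induct)
  case base then show ?case by simp
next
  case (step q)
  have "{1..q+1} = insert (q+1) {1..q}" using step by auto
  then have "(\<Sum>x\<in>{1..q+1}. (M - a*x) * (M - b*x)) = (M - a*(q+1)) * (M - b*(q+1)) + (\<Sum>x\<in>{1..q}. (M - a*x) * (M - b*x))"
    by simp
  then show ?case using step.IH by (simp add: algebra_simps power2_eq_square)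
qed

lemma TT_sym: "TT n a b = TT n b a"
  unfolding TT_def by (simp add: mult.commute)

lemma TT_split:
  assumes n: "n \<ge> 0"
  shows "TT n a b = (2*n+1)^2 + 2 * (\<Sum>x\<in>{1..2*n}. tt n (a*x) * tt n (b*x))"
proof -
  let ?g = "\<lambda>x. tt n (a*x) * tt n (b*x)"
  have s1: "{-2*n..2*n} = {-2*n..-1} \<union> insert 0 {1..2*n}" using n by auto
  have "TT n a b = sum ?g {-2*n..-1} + sum ?g (insert 0 {1..2*n})"
    unfolding TT_def s1 by (rule sum.union_disjoint) auto
  also have "sum ?g (insert 0 {1..2*n}) = ?g 0 + sum ?g {1..2*n}" by simp
  also have "sum ?g {-2*n..-1} = sum ?g {1..2*n}"
  proof -
    have "sum ?g {-2*n..-1} = sum (\<lambda>x. ?g (-x)) {1..2*n}"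
      by (rule sum.reindex_bij_witness[of _ uminus uminus]) auto
    also have "\<dots> = sum ?g {1..2*n}" by (rule sum.cong) (auto simp: tt_def abs_mult)
    finally show ?thesis .
  qed
  also have "?g 0 = (2*n+1)^2" using n by (simp add: tt_def power2_eq_square)
  finally show ?thesis by simp
qed

lemma TT_formula:
  assumes n: "n \<ge> 0" and a: "1 \<le> a" and ab: "a \<le> b"
  shows "TT n a b = (2*n+1)^2 + 2 * (\<Sum>x\<in>{1..2*n div b}. (2*n+1 - a*x) * (2*n+1 - b*x))"
proof -
  let ?q = "2*n div b"
  have b: "b \<ge> 1" using a ab by simp
  have q0: "?q \<ge> 0" using n b by (simp add: pos_imp_zdiv_nonneg_iff)
  have qle: "?q \<le> 2*n"
  proof -
    have "b * ?q \<le> 2*n" using int_le_div_iff[of b ?q "2*n"] b by simp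
    moreover have "?q * 1 \<le> ?q * b" using q0 b by (intro mult_left_mono) auto
    ultimately show ?thesis by (simp add: mult.commute)
  qed
  have sp: "{1..2*n} = {1..?q} \<union> {?q+1..2*n}" using q0 qle by auto
  have "(\<Sum>x\<in>{1..2*n}. tt n (a*x) * tt n (b*x))
      = (\<Sum>x\<in>{1..?q}. tt n (a*x) * tt n (b*x)) + (\<Sum>x\<in>{?q+1..2*n}. tt n (a*x) * tt n (b*x))"
    unfolding sp by (rule sum.union_disjoint) auto
  also have "(\<Sum>x\<in>{?q+1..2*n}. tt n (a*x) * tt n (b*x)) = 0"
  proof (rule sum.neutral, rule ballI)
    fix x assume x: "x \<in> {?q+1..2*n}"
    then have "x > ?q" by simp
    then have "b * x > 2*n" using b int_le_div_iff[of b x "2*n"] by linarith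
    moreover have "x \<ge> 1" using x q0 by simp
    ultimately have "tt n (b*x) = 0" using b by (simp add: tt_def abs_mult)
    then show "tt n (a*x) * tt n (b*x) = 0" by simp
  qed
  also have "(\<Sum>x\<in>{1..?q}. tt n (a*x) * tt n (b*x)) = (\<Sum>x\<in>{1..?q}. (2*n+1 - a*x) * (2*n+1 - b*x))"
  proof (rule sum.cong[OF refl])
    fix x assume x: "x \<in> {1..?q}"
    then have "b * x \<le> 2*n" using b int_le_div_iff[of b x "2*n"] by simp
    moreover have "a * x \<le> b * x" using ab x by (simp add: mult_right_mono)
    moreover have "0 \<le> a * x" using a x by simp
    ultimately show "tt n (a*x) * tt n (b*x) = (2*n+1 - a*x) * (2*n+1 - b*x)"
      by (simp add: tt_def)
  qed
  finally show ?thesis using TT_split[OF n, of a b] by simp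
qed

lemma E_bound:
  fixes a b M e :: real
  assumes a1: "1 \<le> a" and ab: "a \<le> b" and e1: "1 \<le> e" and eb: "e \<le> b" and bM: "b \<le> M"
  shows "\<bar>M*(3*(a-b)*e*(e-b) + a*b^2) - a*e*(e-b)*(2*e-b)\<bar> \<le> 5*b^2*M^2"
proof -
  have b0: "0 \<le> b" using a1 ab by simp
  have ebe: "0 \<le> e*(b-e)" "e*(b-e) \<le> b*b" using e1 eb b0 by (auto intro: mult_mono)
  have h1: "0 \<le> (b-a)*(e*(b-e))" using ab ebe e1 eb by (intro mult_nonneg_nonneg) auto
  have h1': "(b-a)*(e*(b-e)) \<le> b*(b*b)" using ab a1 ebe b0 e1 eb by (intro mult_mono) auto
  have eq1: "(a-b)*e*(e-b) = (b-a)*(e*(b-e))" by (simp add: algebra_simps)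
  have h2: "a*b^2 \<le> b*b^2" using ab b0 by (intro mult_right_mono) auto
  have h2': "0 \<le> a*b^2" using a1 by simp
  define P1 where "P1 = 3*(a-b)*e*(e-b) + a*b^2"
  have P1: "0 \<le> P1" "P1 \<le> 4*b^3" unfolding P1_def using h1 h1' eq1 h2 h2'
    by (simp_all add: power2_eq_square power3_eq_cube algebra_simps)
  have M0: "0 \<le> M" using b0 bM by simp
  have MP1: "\<bar>M*P1\<bar> \<le> 4*b^2*M^2"
  proof -
    have "\<bar>M*P1\<bar> = M*P1" using M0 P1 by simp
    also have "\<dots> \<le> M*(4*b^3)" using M0 P1 by (intro mult_left_mono) auto
    also have "\<dots> = 4*b^2*(M*b)" by (simp add: power2_eq_square power3_eq_cube)
    also have "\<dots> \<le> 4*b^2*(M*M)" using bM M0 b0 by (intro mult_left_mono) auto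
    finally show ?thesis by (simp add: power2_eq_square)
  qed
  have P2: "\<bar>a*e*(e-b)*(2*e-b)\<bar> \<le> b^2*M^2"
  proof -
    have "\<bar>a*e*(e-b)*(2*e-b)\<bar> = \<bar>a\<bar>*\<bar>e\<bar>*\<bar>e-b\<bar>*\<bar>2*e-b\<bar>" by (simp add: abs_mult)
    also have "\<dots> \<le> b*b*b*b"
      using a1 ab e1 eb b0 by (intro mult_mono) (auto simp: abs_le_iff)
    also have "\<dots> \<le> b*b*M*M" using bM b0 M0 by (intro mult_mono) auto
    finally show ?thesis by (simp add: power2_eq_square)
  qed
  show ?thesis using MP1 P2 unfolding P1_def by (simp add: abs_diff_le_iff abs_le_iff) linarith?
qed

lemma E_identity:
  fixes a b M q e S T :: int
  assumes "T = M^2 + 2*S" "6*S = 6*q*M^2 - 3*(a+b)*M*q*(q+1) + a*b*q*(q+1)*(2*q+1)" "M = b*q + e"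
  shows "3*b^2*T - 3*b*M^3 + a*M^3 = M*(3*(a-b)*e*(e-b) + a*b^2) - a*e*(e-b)*(2*e-b)"
  using assms by algebra

lemma TT_est:
  fixes n a b :: int
  assumes n: "n \<ge> 0" and a: "1 \<le> a" and ab: "a \<le> b" and b2: "b \<le> 2*n"
  shows "\<bar>real_of_int (TT n a b) - real_of_int (2*n+1)^3 * (1/b - a/(3*b^2))\<bar> \<le> 2 * real_of_int (2*n+1)^2"
proof -
  define q where "q = 2*n div b"
  define M where "M = 2*n+1"
  define S where "S = (\<Sum>x\<in>{1..q}. (M - a*x) * (M - b*x))"
  define e where "e = M - b*q"
  have b1: "b \<ge> 1" using a ab by simp
  have q0: "q \<ge> 0" unfolding q_def using n b1 by (simp add: pos_imp_zdiv_nonneg_iff)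
  have hT: "TT n a b = M^2 + 2*S" unfolding M_def S_def q_def using TT_formula[OF n a ab] by simp
  have hS: "6*S = 6*q*M^2 - 3*(a+b)*M*q*(q+1) + a*b*q*(q+1)*(2*q+1)"
    unfolding S_def by (rule closed_form[OF q0])
  have he: "e = 2*n mod b + 1" unfolding e_def M_def q_def
    using div_mult_mod_eq[of "2*n" b] by (simp add: algebra_simps)
  have m1: "0 \<le> 2*n mod b" "2*n mod b < b" using b1 by simp_all
  have e1: "1 \<le> e" "e \<le> b" using he m1 by simp_all
  have hM: "M = b*q + e" unfolding e_def by simp
  have id: "3*b^2*TT n a b - 3*b*M^3 + a*M^3 = M*(3*(a-b)*e*(e-b) + a*b^2) - a*e*(e-b)*(2*e-b)"
    by (rule E_identity[OF hT hS hM])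
  have bM: "b \<le> M" using b2 unfolding M_def by simp
  define A where "A = real_of_int a"
  define B where "B = real_of_int b"
  define MM where "MM = real_of_int M"
  define EE where "EE = real_of_int e"
  define TR where "TR = real_of_int (TT n a b)"
  have bd: "\<bar>MM*(3*(A-B)*EE*(EE-B) + A*B^2) - A*EE*(EE-B)*(2*EE-B)\<bar> \<le> 5*B^2*MM^2"
    by (rule E_bound) (use a ab e1 bM in \<open>simp_all add: A_def B_def MM_def EE_def\<close>)
  have idr: "3*B^2*TR - 3*B*MM^3 + A*MM^3 = MM*(3*(A-B)*EE*(EE-B) + A*B^2) - A*EE*(EE-B)*(2*EE-B)"
    using arg_cong[OF id, of real_of_int] unfolding A_def B_def MM_def EE_def TR_def by simp
  have bp: "B > 0" using b1 unfolding B_def by simp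
  have "TR - MM^3 * (1/B - A/(3*B^2)) = (3*B^2*TR - 3*B*MM^3 + A*MM^3) / (3*B^2)"
    using bp by (simp add: field_simps power2_eq_square)
  also have "\<bar>\<dots>\<bar> \<le> (5*B^2*MM^2) / (3*B^2)"
  proof -
    have h: "\<bar>3*B^2\<bar> = 3*B^2" by simp
    show ?thesis unfolding idr abs_divide h by (rule divide_right_mono[OF bd]) simp
  qed
  also have "\<dots> \<le> 2 * MM^2" using bp by (simp add: field_simps)
  finally show ?thesis unfolding M_def A_def B_def MM_def TR_def by simp
qed

lemma X_real_est:
  fixes n c \<tau> T V :: real
  assumes n1: "n \<ge> 1" and c1: "c \<ge> 1" and c2: "c \<le> 2*n" and t0: "0 \<le> \<tau>" and t1: "\<tau> \<le> 1/c"
    and hT: "\<bar>T - (2*n+1)^3 * \<tau>\<bar> \<le> 2*(2*n+1)^2" and hV: "\<bar>V - 2*n/c\<bar> \<le> 1" and V0: "V \<ge> 0"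
  shows "\<bar>T * V^2 - (2*n+1)^2 - (2*n)^5 * \<tau> / c^2\<bar> \<le> 600 * n^4 / c^2"
proof -
  define y where "y = n / c"
  define M where "M = 2*n+1"
  define e1 where "e1 = T - M^3 * \<tau>"
  have cp: "c > 0" using c1 by simp
  have y2: "y \<ge> 1/2" unfolding y_def using c2 cp by (simp add: field_simps)
  have ny: "n^4 / c^2 = n^2 * y^2" unfolding y_def by (simp add: power2_eq_square field_simps eval_nat_numeral)
  have M3: "M \<le> 3*n" "M \<ge> 0" unfolding M_def using n1 by simp_all
  have he1: "\<bar>e1\<bar> \<le> 18 * n^2"
  proof -
    have "\<bar>e1\<bar> \<le> 2*M^2" using hT unfolding e1_def M_def by simp
    also have "\<dots> \<le> 2*(3*n)^2" using M3 by (intro mult_left_mono power_mono) auto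
    finally show ?thesis by (simp add: power2_eq_square)
  qed
  have ncy: "2*n/c = 2*y" unfolding y_def by simp
  have hV': "\<bar>V - 2*y\<bar> \<le> 1" using hV ncy by simp
  have V4: "V \<le> 4*y" using hV' y2 by (simp add: abs_le_iff)
  have VV: "V^2 \<le> 16*y^2"
  proof -
    have "V^2 \<le> (4*y)^2" using V4 V0 by (intro power_mono) auto
    then show ?thesis by (simp add: power2_eq_square)
  qed
  have dV: "\<bar>V^2 - 4*y^2\<bar> \<le> 6*y"
  proof -
    have "V^2 - 4*y^2 = (V - 2*y) * (V + 2*y)" by (simp add: power2_eq_square algebra_simps)
    then have "\<bar>V^2 - 4*y^2\<bar> = \<bar>V - 2*y\<bar> * (V + 2*y)" using V0 y2 by (simp add: abs_mult)
    also have "\<dots> \<le> 1 * (6*y)" using hV' V4 V0 y2 by (intro mult_mono) auto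
    finally show ?thesis by simp
  qed
  have decomp: "T * V^2 - M^2 - (2*n)^5 * \<tau> / c^2
      = e1 * V^2 + M^3 * \<tau> * (V^2 - 4*y^2) + 4*y^2*\<tau>*(M^3 - 8*n^3) - M^2"
    unfolding e1_def y_def using cp by (simp add: field_simps power2_eq_square eval_nat_numeral)
  have b1: "\<bar>e1 * V^2\<bar> \<le> 288 * (n^2*y^2)"
  proof -
    have "\<bar>e1 * V^2\<bar> = \<bar>e1\<bar> * V^2" by (simp add: abs_mult)
    also have "\<dots> \<le> (18*n^2) * (16*y^2)" using he1 VV by (intro mult_mono) auto
    finally show ?thesis by simp
  qed
  have Mt: "M^3 * \<tau> \<le> 27 * n^3 / c"
  proof -
    have "M^3 \<le> (3*n)^3" using M3 by (intro power_mono) auto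
    then have "M^3 * \<tau> \<le> (3*n)^3 * (1/c)" using t0 t1 M3 by (intro mult_mono) auto
    then show ?thesis by (simp add: power3_eq_cube)
  qed
  have b2: "\<bar>M^3 * \<tau> * (V^2 - 4*y^2)\<bar> \<le> 162 * (n^2*y^2)"
  proof -
    have "\<bar>M^3 * \<tau> * (V^2 - 4*y^2)\<bar> = (M^3 * \<tau>) * \<bar>V^2 - 4*y^2\<bar>" using M3 t0 by (simp add: abs_mult)
    also have "\<dots> \<le> (27 * n^3 / c) * (6*y)" using Mt dV M3 t0 n1 cp by (intro mult_mono) auto
    also have "\<dots> = 162 * (n^2*y^2)" unfolding y_def by (simp add: power2_eq_square power3_eq_cube)
    finally show ?thesis .
  qed
  have b3: "\<bar>4*y^2*\<tau>*(M^3 - 8*n^3)\<bar> \<le> 76 * (n^2*y^2)"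
  proof -
    have m: "M^3 - 8*n^3 = 12*n^2 + 6*n + 1" unfolding M_def by (simp add: power2_eq_square power3_eq_cube algebra_simps)
    have nn: "n \<le> n*n" using n1 by (simp add: mult_le_cancel_left1)
    have m2: "12*n^2 + 6*n + 1 \<le> 19*n^2" using n1 nn unfolding power2_eq_square by linarith
    have "1/c \<le> 1" using c1 by simp
    then have tc: "\<tau> \<le> 1" using t1 by linarith
    have "\<bar>4*y^2*\<tau>*(M^3 - 8*n^3)\<bar> = (4*y^2)*\<tau>*(12*n^2 + 6*n + 1)" unfolding m using t0 n1 by (simp add: abs_mult)
    also have "\<dots> \<le> (4*y^2)*1*(19*n^2)" using tc m2 t0 n1 by (intro mult_mono) auto
    finally show ?thesis by (simp add: mult.commute)
  qed
  have b4: "M^2 \<le> 36 * (n^2*y^2)"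
  proof -
    have "M^2 \<le> (3*n)^2" using M3 by (intro power_mono) auto
    also have "\<dots> = 9*n^2*1" by (simp add: power2_eq_square)
    also have "\<dots> \<le> 9*n^2*(4*y^2)"
    proof -
      have "(1/2)^2 \<le> y^2" using y2 by (intro power_mono) auto
      then have "1 \<le> 4*y^2" by (simp add: power2_eq_square)
      then show ?thesis by (intro mult_left_mono) auto
    qed
    finally show ?thesis by simp
  qed
  have "\<bar>T * V^2 - M^2 - (2*n)^5 * \<tau> / c^2\<bar> \<le> 562 * (n^2*y^2)"
  proof -
    have "\<bar>e1 * V^2 + M^3 * \<tau> * (V^2 - 4*y^2) + 4*y^2*\<tau>*(M^3 - 8*n^3) - M^2\<bar> \<le> 562 * (n^2*y^2)"
    proof -
      have M2: "0 \<le> M^2" by simp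
      show ?thesis using b1 b2 b3 b4 M2 unfolding abs_le_iff by (elim conjE) (intro conjI; linarith)
    qed
    then show ?thesis unfolding decomp .
  qed
  also have "\<dots> \<le> 600 * (n^2*y^2)" by simp
  also have "\<dots> = 600 * n^4 / c^2" using ny by simp
  finally show ?thesis unfolding M_def .
qed

definition ch :: "int \<Rightarrow> int \<Rightarrow> int" where "ch n y = (if \<bar>y\<bar> \<le> n then 1 else 0)"
definition ww :: "int \<Rightarrow> int \<times> int \<times> int \<Rightarrow> int" where
  "ww n = (\<lambda>(x,y,z). tt n x * ch n y * ch n z)"
definition sc :: "int \<Rightarrow> int \<times> int \<times> int \<Rightarrow> int \<times> int \<times> int" where
  "sc k = (\<lambda>(x,y,z). (k*x, k*y, k*z))"
definition Bx :: "int \<Rightarrow> (int \<times> int \<times> int) set" where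
  "Bx n = {-2*n..2*n} \<times> {-n..n} \<times> {-n..n}"
definition XX :: "int \<Rightarrow> int \<Rightarrow> int \<Rightarrow> int" where
  "XX n k l = (\<Sum>m\<in>Bx n - {(0,0,0)}. ww n (sc k m) * ww n (sc l m))"

lemma finite_Bx: "finite (Bx n)" unfolding Bx_def by simp

lemma abs_mul_le_iff:
  fixes c y n :: int
  assumes c: "c > 0"
  shows "\<bar>c*y\<bar> \<le> n \<longleftrightarrow> \<bar>y\<bar> \<le> n div c"
  using int_le_div_iff[OF c, of "\<bar>y\<bar>" n] c by (simp add: abs_mult)

lemma Y_sum:
  fixes n k l :: int
  assumes n: "n \<ge> 0" and k: "k \<ge> 1" and l: "l \<ge> 1"
  shows "(\<Sum>y\<in>{-n..n}. ch n (k*y) * ch n (l*y)) = 2 * (n div max k l) + 1"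
proof -
  define c where "c = max k l"
  have c: "c > 0" using k unfolding c_def by simp
  have "(\<Sum>y\<in>{-n..n}. ch n (k*y) * ch n (l*y)) = (\<Sum>y\<in>{-n..n}. if \<bar>y\<bar> \<le> n div c then 1 else 0)"
  proof (rule sum.cong[OF refl])
    fix y assume "y \<in> {-n..n}"
    have a1: "\<bar>k*y\<bar> \<le> \<bar>c*y\<bar>" "\<bar>l*y\<bar> \<le> \<bar>c*y\<bar>"
      using k l unfolding c_def abs_mult by (auto intro!: mult_right_mono)
    have a2: "\<bar>c*y\<bar> = \<bar>k*y\<bar> \<or> \<bar>c*y\<bar> = \<bar>l*y\<bar>" unfolding c_def by (simp add: max_def)
    have "(\<bar>k*y\<bar> \<le> n \<and> \<bar>l*y\<bar> \<le> n) \<longleftrightarrow> \<bar>c*y\<bar> \<le> n"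
      using a1 a2 by auto
    also have "\<dots> \<longleftrightarrow> \<bar>y\<bar> \<le> n div c" by (rule abs_mul_le_iff[OF c])
    finally show "ch n (k*y) * ch n (l*y) = (if \<bar>y\<bar> \<le> n div c then 1 else 0)"
      unfolding ch_def by auto
  qed
  also have "\<dots> = int (card {y\<in>{-n..n}. \<bar>y\<bar> \<le> n div c})"
    by (simp add: sum.If_cases Int_def conj_commute)
  also have "{y\<in>{-n..n}. \<bar>y\<bar> \<le> n div c} = {-(n div c)..n div c}"
  proof -
    have "n div c \<le> n" using n c int_le_div_iff[OF c, of "n div c" n]
      by (smt (verit, ccfv_SIG) div_by_1 zdiv_mono2)
    then show ?thesis by auto
  qed
  also have "int (card {-(n div c)..n div c}) = 2 * (n div c) + 1"
    using n c by (simp add: pos_imp_zdiv_nonneg_iff)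
  finally show ?thesis unfolding c_def .
qed

lemma XX_eq:
  fixes n k l :: int
  assumes n: "n \<ge> 0" and k: "k \<ge> 1" and l: "l \<ge> 1"
  shows "XX n k l = TT n k l * (2 * (n div max k l) + 1)^2 - (2*n+1)^2"
proof -
  let ?g = "\<lambda>m. ww n (sc k m) * ww n (sc l m)"
  have z: "(0,0,0) \<in> Bx n" using n unfolding Bx_def by simp
  have "XX n k l = sum ?g (Bx n) - ?g (0,0,0)"
    unfolding XX_def using finite_Bx z by (simp add: sum_diff1)
  also have "?g (0,0,0) = (2*n+1)^2" using n by (simp add: ww_def sc_def tt_def ch_def power2_eq_square)
  also have "sum ?g (Bx n) = TT n k l * (2 * (n div max k l) + 1)^2"
  proof -
    let ?A = "{-2*n..2*n}" and ?B = "{-n..n}"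
    let ?F = "\<lambda>x. tt n (k*x) * tt n (l*x)" and ?G = "\<lambda>y. ch n (k*y) * ch n (l*y)"
    have "sum ?g (Bx n) = (\<Sum>(x,y,z)\<in>?A \<times> ?B \<times> ?B. ?F x * (?G y * ?G z))"
      unfolding Bx_def by (rule sum.cong) (auto simp: ww_def sc_def algebra_simps)
    also have "\<dots> = (\<Sum>x\<in>?A. \<Sum>(y,z)\<in>?B \<times> ?B. ?F x * (?G y * ?G z))"
      by (simp add: sum.cartesian_product case_prod_beta)
    also have "\<dots> = (\<Sum>x\<in>?A. ?F x * (\<Sum>(y,z)\<in>?B \<times> ?B. ?G y * ?G z))"
      by (simp add: sum_distrib_left case_prod_beta)
    also have "(\<Sum>(y,z)\<in>?B \<times> ?B. ?G y * ?G z) = sum ?G ?B * sum ?G ?B"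
      by (simp add: sum_product sum.cartesian_product)
    also have "sum ?G ?B = 2 * (n div max k l) + 1" by (rule Y_sum[OF n k l])
    finally show ?thesis unfolding TT_def by (simp add: sum_distrib_right power2_eq_square)
  qed
  finally show ?thesis .
qed

lemma XX_est:
  fixes n :: int and k l :: nat
  assumes n: "n \<ge> 1" and k: "k \<ge> 1" and l: "l \<ge> 1" and c2: "int (max k l) \<le> 2*n"
  shows "\<bar>real_of_int (XX n (int k) (int l)) - (2*real_of_int n)^5 * fk k l\<bar>
          \<le> 600 * real_of_int n^4 / real (max k l)^2"
proof -
  define c where "c = max k l"
  define mn where "mn = min k l"
  define \<tau> where "\<tau> = 1 / real c - real mn / (3 * real c ^ 2)"
  define V where "V = 2 * (n div int c) + 1"
  have c1: "c \<ge> 1" using k unfolding c_def by simp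
  have cr: "real c \<ge> 1" using c1 by simp
  have mc: "mn \<le> c" "mn \<ge> 1" unfolding mn_def c_def using k l by auto
  have mx: "max (int k) (int l) = int c" "min (int k) (int l) = int mn" unfolding c_def mn_def by auto
  have fk_eq: "fk k l = \<tau> / real c ^ 2"
    unfolding fk_def \<tau>_def c_def[symmetric] mn_def[symmetric] using cr
    by (simp add: field_simps eval_nat_numeral)
  have t0: "0 \<le> \<tau>"
  proof -
    have "real mn / (3 * real c ^ 2) \<le> real c / (3 * real c ^ 2)" using mc by (simp add: divide_right_mono)
    also have "\<dots> = 1 / (3 * real c)" using cr by (simp add: power2_eq_square)
    also have "\<dots> \<le> 1 / real c" using cr by (simp add: frac_le)
    finally show ?thesis unfolding \<tau>_def by simp
  qed
  have t1: "\<tau> \<le> 1 / real c" unfolding \<tau>_def by simp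
  have TTmm: "TT n (int k) (int l) = TT n (int mn) (int c)"
    unfolding mn_def c_def by (cases "k \<le> l") (simp_all add: TT_sym max_def min_def)
  have hT: "\<bar>real_of_int (TT n (int k) (int l)) - (2*real_of_int n+1)^3 * \<tau>\<bar> \<le> 2*(2*real_of_int n+1)^2"
    using TT_est[of n "int mn" "int c"] mc c2 n unfolding TTmm \<tau>_def c_def by simp
  have hV: "\<bar>real_of_int V - 2*real_of_int n/real c\<bar> \<le> 1"
  proof -
    have cp: "int c > 0" using c1 by simp
    have d: "n = int c * (n div int c) + n mod int c" by simp
    have m: "0 \<le> n mod int c" "n mod int c < int c" using cp by simp_all
    have dr: "real_of_int n = real c * real_of_int (n div int c) + real_of_int (n mod int c)"
      by (metis d of_int_add of_int_mult of_int_of_nat_eq)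
    have "real_of_int n / real c = real_of_int (n div int c) + real_of_int (n mod int c) / real c"
      unfolding dr using cr by (simp add: field_simps)
    moreover have "0 \<le> real_of_int (n mod int c) / real c" "real_of_int (n mod int c) / real c \<le> 1"
    proof -
      have "real_of_int (n mod int c) \<le> real_of_int (int c)" using m by linarith
      then have h: "real_of_int (n mod int c) \<le> real c" by simp
      show "0 \<le> real_of_int (n mod int c) / real c" using m cr by simp
      show "real_of_int (n mod int c) / real c \<le> 1" using h cr by (simp add: divide_le_eq_1)
    qed
    ultimately show ?thesis unfolding V_def by (simp add: abs_le_iff)
  qed
  have V0: "real_of_int V \<ge> 0" unfolding V_def using n c1 by (simp add: pos_imp_zdiv_nonneg_iff)
  have XXe: "real_of_int (XX n (int k) (int l)) = real_of_int (TT n (int k) (int l)) * real_of_int V^2 - (2*real_of_int n+1)^2"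
    using XX_eq[of n "int k" "int l"] n k l unfolding V_def mx by simp
  have "\<bar>real_of_int (TT n (int k) (int l)) * real_of_int V^2 - (2*real_of_int n+1)^2 - (2*real_of_int n)^5 * \<tau> / real c^2\<bar>
      \<le> 600 * real_of_int n^4 / real c^2"
    by (rule X_real_est[OF _ cr _ t0 t1 hT hV V0]) (use n c2 in \<open>simp_all add: c_def\<close>)
  then show ?thesis unfolding XXe fk_eq c_def by simp
qed

definition mk :: "int \<times> int \<times> int \<times> int \<Rightarrow> int^2^2" where
  "mk = (\<lambda>(a,b,c,d). vector [vector [a,b], vector [c,d]])"

lemma mk_nth: "mk (a,b,c,d) $ 1 $ 1 = a" "mk (a,b,c,d) $ 1 $ 2 = b"
  "mk (a,b,c,d) $ 2 $ 1 = c" "mk (a,b,c,d) $ 2 $ 2 = d"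
  unfolding mk_def by simp_all

lemma mat2_eq: "(A::'a^2^2) = B \<longleftrightarrow> A$1$1 = B$1$1 \<and> A$1$2 = B$1$2 \<and> A$2$1 = B$2$1 \<and> A$2$2 = B$2$2"
  by (auto simp: vec_eq_iff forall_2)

lemma mk_surj: "A = mk (A$1$1, A$1$2, A$2$1, A$2$2)"
  by (simp add: mat2_eq mk_nth)

lemma mk_inj: "inj mk"
proof (rule injI)
  fix p q assume "mk p = mk q"
  then show "p = q"
    by (cases p; cases q) (simp add: mat2_eq mk_nth)
qed

lemma mk_mult: "(mk p ** mk q) $ i $ j = mk p $ i $ 1 * mk q $ 1 $ j + mk p $ i $ 2 * mk q $ 2 $ j"
  by (simp add: matrix_matrix_mult_def sum_2)

definition cr :: "int \<times> int \<times> int \<Rightarrow> int \<times> int \<times> int \<Rightarrow> bool" where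
  "cr = (\<lambda>(x1,x2,x3) (y1,y2,y3). x2*y3 = x3*y2 \<and> x1*y2 = x2*y1 \<and> x1*y3 = x3*y1)"

definition uu :: "int \<times> int \<times> int \<times> int \<Rightarrow> int \<times> int \<times> int" where
  "uu = (\<lambda>(a,b,c,d). (a - d, b, c))"

lemma mk_comm: "mk p ** mk q = mk q ** mk p \<longleftrightarrow> cr (uu p) (uu q)"
proof -
  obtain a b c d where p: "p = (a,b,c,d)" by (cases p) auto
  obtain e f g h where q: "q = (e,f,g,h)" by (cases q) auto
  show ?thesis unfolding p q mat2_eq mk_mult mk_nth cr_def uu_def
    by (auto simp: algebra_simps)
qed

definition I4 :: "int \<Rightarrow> (int \<times> int \<times> int \<times> int) set" where
  "I4 n = {-n..n} \<times> {-n..n} \<times> {-n..n} \<times> {-n..n}"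

lemma bounded_mats_eq: "bounded_mats N = mk ` I4 (int N)"
proof
  show "bounded_mats N \<subseteq> mk ` I4 (int N)"
  proof
    fix A :: "int^2^2" assume "A \<in> bounded_mats N"
    then have "\<forall>i j. \<bar>A $ i $ j\<bar> \<le> int N" unfolding bounded_mats_def by simp
    then have "\<bar>A$1$1\<bar> \<le> int N" "\<bar>A$1$2\<bar> \<le> int N" "\<bar>A$2$1\<bar> \<le> int N" "\<bar>A$2$2\<bar> \<le> int N" by blast+
    then have "(A$1$1, A$1$2, A$2$1, A$2$2) \<in> I4 (int N)" unfolding I4_def by (auto simp: abs_le_iff)
    then show "A \<in> mk ` I4 (int N)" using mk_surj[of A] by (metis image_eqI)
  qed
next
  show "mk ` I4 (int N) \<subseteq> bounded_mats N"
  proof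
    fix A assume "A \<in> mk ` I4 (int N)"
    then obtain a b c d where A: "A = mk (a,b,c,d)" and "(a,b,c,d) \<in> I4 (int N)" by auto
    then have "\<bar>a\<bar> \<le> int N" "\<bar>b\<bar> \<le> int N" "\<bar>c\<bar> \<le> int N" "\<bar>d\<bar> \<le> int N" unfolding I4_def by auto
    then have "\<forall>i j. \<bar>A $ i $ j\<bar> \<le> int N" unfolding A by (auto simp: forall_2 mk_nth)
    then show "A \<in> bounded_mats N" unfolding bounded_mats_def by simp
  qed
qed

lemma count_eq: "commuting_count TYPE(2) N = card {(p,q). p \<in> I4 (int N) \<and> q \<in> I4 (int N) \<and> cr (uu p) (uu q)}"
proof -
  let ?S = "{(p,q). p \<in> I4 (int N) \<and> q \<in> I4 (int N) \<and> cr (uu p) (uu q)}"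
  have "{(A, B). A \<in> (bounded_mats N :: (int ^ 2 ^ 2) set) \<and> B \<in> bounded_mats N \<and> A ** B = B ** A}
        = (\<lambda>(p,q). (mk p, mk q)) ` ?S"
  proof
    show "(\<lambda>(p,q). (mk p, mk q)) ` ?S \<subseteq> {(A, B). A \<in> bounded_mats N \<and> B \<in> bounded_mats N \<and> A ** B = B ** A}"
      using mk_comm by (auto simp: bounded_mats_eq)
  next
    show "{(A, B). A \<in> (bounded_mats N :: (int ^ 2 ^ 2) set) \<and> B \<in> bounded_mats N \<and> A ** B = B ** A} \<subseteq> (\<lambda>(p,q). (mk p, mk q)) ` ?S"
    proof (clarify)
      fix A B :: "int^2^2" assume h: "A \<in> bounded_mats N" "B \<in> bounded_mats N" "A ** B = B ** A"
      obtain p where p: "p \<in> I4 (int N)" "A = mk p" using h(1) by (auto simp: bounded_mats_eq)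
      obtain q where q: "q \<in> I4 (int N)" "B = mk q" using h(2) by (auto simp: bounded_mats_eq)
      have "cr (uu p) (uu q)" using h(3) mk_comm p q by simp
      then show "(A, B) \<in> (\<lambda>(p,q). (mk p, mk q)) ` ?S" using p q by force
    qed
  qed
  moreover have "inj_on (\<lambda>(p,q). (mk p, mk q)) ?S"
    using mk_inj by (auto simp: inj_on_def inj_def)
  ultimately show ?thesis unfolding commuting_count_def by (simp add: card_image)
qed

lemma card_diff_pairs:
  fixes n x :: int
  assumes n: "n \<ge> 0"
  shows "int (card {(a,d). a \<in> {-n..n} \<and> d \<in> {-n..n} \<and> a - d = x}) = tt n x"
proof -
  have "{(a,d). a \<in> {-n..n} \<and> d \<in> {-n..n} \<and> a - d = x} = (\<lambda>d. (d + x, d)) ` {max (-n) (-n-x)..min n (n-x)}"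
  proof (rule set_eqI)
    fix z :: "int \<times> int"
    obtain a d where z: "z = (a,d)" by (cases z) auto
    show "z \<in> {(a,d). a \<in> {-n..n} \<and> d \<in> {-n..n} \<and> a - d = x} \<longleftrightarrow> z \<in> (\<lambda>d. (d + x, d)) ` {max (-n) (-n-x)..min n (n-x)}"
    proof
      assume "z \<in> {(a,d). a \<in> {-n..n} \<and> d \<in> {-n..n} \<and> a - d = x}"
      then show "z \<in> (\<lambda>d. (d + x, d)) ` {max (-n) (-n-x)..min n (n-x)}"
        unfolding z by (intro image_eqI[where x=d]) auto
    qed (auto simp: z)
  qed
  moreover have "inj (\<lambda>d::int. (d + x, d))" by (auto simp: inj_def)
  ultimately have "card {(a,d). a \<in> {-n..n} \<and> d \<in> {-n..n} \<and> a - d = x} = card {max (-n) (-n-x)..min n (n-x)}"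
    by (simp add: card_image inj_on_def)
  also have "int \<dots> = tt n x" unfolding tt_def by (auto simp: max_def min_def)
  finally show ?thesis .
qed

lemma fiber_card:
  fixes n :: int
  assumes n: "n \<ge> 0"
  shows "int (card {p \<in> I4 n. uu p = x}) = ww n x"
proof -
  obtain x1 x2 x3 where x: "x = (x1,x2,x3)" by (cases x) auto
  show ?thesis
  proof (cases "\<bar>x2\<bar> \<le> n \<and> \<bar>x3\<bar> \<le> n")
    case True
    have "{p \<in> I4 n. uu p = x} = (\<lambda>(a,d). (a,x2,x3,d)) ` {(a,d). a \<in> {-n..n} \<and> d \<in> {-n..n} \<and> a - d = x1}"
      unfolding x I4_def uu_def using True by (auto simp: image_iff abs_le_iff)
    moreover have "inj_on (\<lambda>(a,d). (a,x2,x3,d)) A" for A :: "(int\<times>int) set" by (auto simp: inj_on_def)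
    ultimately have "card {p \<in> I4 n. uu p = x} = card {(a,d). a \<in> {-n..n} \<and> d \<in> {-n..n} \<and> a - d = x1}"
      by (simp add: card_image)
    then show ?thesis using card_diff_pairs[OF n, of x1] True unfolding x ww_def ch_def by simp
  next
    case False
    have e: "{p \<in> I4 n. uu p = x} = {}" unfolding x I4_def uu_def using False by (auto simp: abs_le_iff)
    have "ww n x = 0" using False unfolding x ww_def ch_def by auto
    then show ?thesis unfolding e by simp
  qed
qed

lemma card_filter_sum:
  assumes "finite A"
  shows "int (card {z\<in>A. P z}) = (\<Sum>z\<in>A. if P z then 1 else 0)"
proof -
  have "sum (\<lambda>_. (1::int)) {z\<in>A. P z} = (\<Sum>z\<in>A. if P z then 1 else 0)"
    by (rule sum.inter_filter[OF assms])
  then show ?thesis by simp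
qed

lemma sum_fiber:
  fixes G :: "'b \<Rightarrow> 'c::comm_ring_1"
  assumes "finite S" "finite T" "f ` S \<subseteq> T"
  shows "(\<Sum>p\<in>S. G (f p)) = (\<Sum>x\<in>T. of_nat (card {p\<in>S. f p = x}) * G x)"
proof -
  have "(\<Sum>p\<in>S. G (f p)) = (\<Sum>x\<in>T. \<Sum>p\<in>{p\<in>S. f p = x}. G (f p))"
    by (rule sum.group[symmetric]) (use assms in auto)
  also have "\<dots> = (\<Sum>x\<in>T. of_nat (card {p\<in>S. f p = x}) * G x)"
    by (rule sum.cong[OF refl]) simp
  finally show ?thesis .
qed

lemma finite_I4: "finite (I4 n)" unfolding I4_def by simp

lemma uu_image: "n \<ge> 0 \<Longrightarrow> uu ` I4 n \<subseteq> Bx n"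
  unfolding I4_def uu_def Bx_def by auto

lemma count_sum:
  fixes N :: nat
  defines "n \<equiv> int N"
  shows "int (commuting_count TYPE(2) N) = (\<Sum>x\<in>Bx n. \<Sum>y\<in>Bx n. ww n x * ww n y * (if cr x y then 1 else 0))"
proof -
  have n0: "n \<ge> 0" unfolding n_def by simp
  let ?S = "{(p,q). p \<in> I4 n \<and> q \<in> I4 n \<and> cr (uu p) (uu q)}"
  have "int (card ?S) = (\<Sum>z\<in>I4 n \<times> I4 n. if cr (uu (fst z)) (uu (snd z)) then 1 else 0)"
  proof -
    have "?S = {z \<in> I4 n \<times> I4 n. cr (uu (fst z)) (uu (snd z))}" by auto
    then show ?thesis using card_filter_sum[of "I4 n \<times> I4 n" "\<lambda>z. cr (uu (fst z)) (uu (snd z))"]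
      by (simp add: finite_I4)
  qed
  also have "\<dots> = (\<Sum>p\<in>I4 n. \<Sum>q\<in>I4 n. if cr (uu p) (uu q) then 1 else 0)"
    by (simp add: sum.cartesian_product case_prod_beta)
  also have "\<dots> = (\<Sum>p\<in>I4 n. \<Sum>y\<in>Bx n. ww n y * (if cr (uu p) y then 1 else 0))"
  proof (rule sum.cong[OF refl])
    fix p
    show "(\<Sum>q\<in>I4 n. if cr (uu p) (uu q) then 1 else 0) = (\<Sum>y\<in>Bx n. ww n y * (if cr (uu p) y then 1 else 0))"
      using sum_fiber[OF finite_I4 finite_Bx uu_image[OF n0], of "\<lambda>y. if cr (uu p) y then (1::int) else 0"]
      by (simp add: fiber_card[OF n0])
  qed
  also have "\<dots> = (\<Sum>x\<in>Bx n. ww n x * (\<Sum>y\<in>Bx n. ww n y * (if cr x y then 1 else 0)))"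
    using sum_fiber[OF finite_I4 finite_Bx uu_image[OF n0], of "\<lambda>x. (\<Sum>y\<in>Bx n. ww n y * (if cr x y then (1::int) else 0))"]
    by (simp add: fiber_card[OF n0])
  also have "\<dots> = (\<Sum>x\<in>Bx n. \<Sum>y\<in>Bx n. ww n x * ww n y * (if cr x y then 1 else 0))"
    by (simp add: sum_distrib_left mult.assoc)
  finally show ?thesis unfolding count_eq n_def .
qed

lemma sum_ww:
  fixes n :: int
  assumes n: "n \<ge> 0"
  shows "(\<Sum>x\<in>Bx n. ww n x) = (2*n+1)^4"
proof -
  have "(\<Sum>x\<in>Bx n. ww n x) = (\<Sum>p\<in>I4 n. (1::int))"
    using sum_fiber[OF finite_I4 finite_Bx uu_image[OF n], of "\<lambda>x. (1::int)"]
    by (simp add: fiber_card[OF n])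
  also have "\<dots> = (2*n+1)^4" unfolding I4_def using n by (simp add: card_cartesian_product eval_nat_numeral)
  finally show ?thesis .
qed

definition KL :: "int \<Rightarrow> (int \<times> int) set" where
  "KL n = {(k,l). k \<in> {1..2*n} \<and> l \<in> {-2*n..2*n} \<and> l \<noteq> 0 \<and> coprime k l}"
definition Idx :: "int \<Rightarrow> ((int \<times> int) \<times> (int \<times> int \<times> int)) set" where
  "Idx n = {((k,l),m). (k,l) \<in> KL n \<and> m \<in> Bx n - {(0,0,0)} \<and> sc k m \<in> Bx n \<and> sc l m \<in> Bx n}"
definition Par :: "int \<Rightarrow> ((int \<times> int \<times> int) \<times> (int \<times> int \<times> int)) set" where
  "Par n = {(x,y). x \<in> Bx n - {(0,0,0)} \<and> y \<in> Bx n - {(0,0,0)} \<and> cr x y}"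
definition phi :: "(int \<times> int) \<times> (int \<times> int \<times> int) \<Rightarrow> (int \<times> int \<times> int) \<times> (int \<times> int \<times> int)" where
  "phi = (\<lambda>((k,l),m). (sc k m, sc l m))"

lemma ww_out: "ww n x \<noteq> 0 \<Longrightarrow> x \<in> Bx n"
  by (cases x) (auto simp: ww_def tt_def ch_def Bx_def abs_le_iff split: if_splits)

lemma sc_neg: "ww n (sc (-l) m) = ww n (sc l m)"
  by (cases m) (simp add: ww_def sc_def tt_def ch_def abs_mult)

lemma XX_neg: "XX n k (-l) = XX n k l"
  unfolding XX_def by (simp add: sc_neg)

lemma finite_KL: "finite (KL n)"
proof -
  have "KL n \<subseteq> {1..2*n} \<times> {-2*n..2*n}" unfolding KL_def by auto
  then show ?thesis by (rule finite_subset) simp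
qed

lemma sc_zero_iff: "sc k m = (0,0,0) \<longleftrightarrow> k = 0 \<or> m = (0,0,0)"
  by (cases m) (auto simp: sc_def)

lemma phi_inj: "inj_on phi (Idx n)"
proof (rule inj_onI)
  fix a b assume a: "a \<in> Idx n" and b: "b \<in> Idx n" and e: "phi a = phi b"
  obtain k l m1 m2 m3 where a': "a = ((k,l),(m1,m2,m3))" by (metis prod.exhaust)
  obtain k' l' n1 n2 n3 where b': "b = ((k',l'),(n1,n2,n3))" by (metis prod.exhaust)
  have ka: "k \<ge> 1" "coprime k l" "(m1,m2,m3) \<noteq> (0,0,0)" using a unfolding a' Idx_def KL_def by auto
  have kb: "k' \<ge> 1" "coprime k' l'" "(n1,n2,n3) \<noteq> (0,0,0)" using b unfolding b' Idx_def KL_def by auto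
  have eqs: "k*m1 = k'*n1" "k*m2 = k'*n2" "k*m3 = k'*n3" "l*m1 = l'*n1" "l*m2 = l'*n2" "l*m3 = l'*n3"
    using e unfolding a' b' phi_def sc_def by auto
  have z: "(k*l' - l*k') * ni = 0" if "k'*ni = k*mi" "l'*ni = l*mi" for ni mi
  proof -
    have "(k*l' - l*k') * ni = k*(l'*ni) - l*(k'*ni)" by (simp add: algebra_simps)
    also have "\<dots> = k*(l*mi) - l*(k*mi)" using that by simp
    also have "\<dots> = 0" by (simp add: algebra_simps)
    finally show ?thesis .
  qed
  have z1: "(k*l' - l*k') * n1 = 0" "(k*l' - l*k') * n2 = 0" "(k*l' - l*k') * n3 = 0"
    using z[OF eqs(1)[symmetric] eqs(4)[symmetric]] z[OF eqs(2)[symmetric] eqs(5)[symmetric]]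
      z[OF eqs(3)[symmetric] eqs(6)[symmetric]] by simp_all
  have kl: "k*l' = l*k'" using z1 kb(3) by auto
  have "k dvd l*k'" using kl by (metis dvd_triv_left)
  then have d1: "k dvd k'" using ka(2) by (simp add: coprime_dvd_mult_right_iff)
  have "k' dvd k*l'" using kl by (metis dvd_triv_right)
  then have d2: "k' dvd k" using kb(2) by (simp add: coprime_dvd_mult_left_iff)
  have kk: "k = k'" using d1 d2 ka(1) kb(1) by (simp add: zdvd_antisym_nonneg)
  have ll: "l = l'" using kl kk ka(1) by simp
  have "m1 = n1" "m2 = n2" "m3 = n3" using eqs kk ka(1) by simp_all
  then show "a = b" unfolding a' b' using kk ll by simp
qed

lemma bezout3: "\<exists>a b c. a*x1 + b*x2 + c*x3 = gcd x1 (gcd x2 (x3::int))"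
proof -
  obtain p q where uv: "p * x2 + q * x3 = gcd x2 x3" using bezout_int by blast
  obtain r w where st: "r * x1 + w * gcd x2 x3 = gcd x1 (gcd x2 x3)" using bezout_int by blast
  have "r * x1 + w * p * x2 + w * q * x3 = gcd x1 (gcd x2 x3)"
    using st uv by (metis (no_types, lifting) add.assoc distrib_left mult.assoc)
  then show ?thesis by blast
qed

lemma bx_bound: "(x1,x2,x3) \<in> Bx n \<Longrightarrow> \<bar>x1\<bar> \<le> 2*n \<and> \<bar>x2\<bar> \<le> 2*n \<and> \<bar>x3\<bar> \<le> 2*n"
  unfolding Bx_def by auto

lemma phi_surj: "Par n \<subseteq> phi ` Idx n"
proof
  fix xy assume xy: "xy \<in> Par n"
  obtain x1 x2 x3 y1 y2 y3 where xy': "xy = ((x1,x2,x3),(y1,y2,y3))" by (metis prod.exhaust)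
  have xB: "(x1,x2,x3) \<in> Bx n" "(x1,x2,x3) \<noteq> (0,0,0)" and yB: "(y1,y2,y3) \<in> Bx n" "(y1,y2,y3) \<noteq> (0,0,0)"
    and c: "x2*y3 = x3*y2" "x1*y2 = x2*y1" "x1*y3 = x3*y1"
    using xy unfolding xy' Par_def cr_def by auto
  define g where "g = gcd x1 (gcd x2 x3)"
  have g0: "g > 0" using xB(2) unfolding g_def by auto
  have gd: "g dvd x1" "g dvd x2" "g dvd x3" unfolding g_def by (meson dvd_trans gcd_dvd1 gcd_dvd2)+
  obtain a b cc where abc: "a*x1 + b*x2 + cc*x3 = g" using bezout3 unfolding g_def by blast
  define lam where "lam = a*y1 + b*y2 + cc*y3"
  have gy: "g*y1 = lam*x1" "g*y2 = lam*x2" "g*y3 = lam*x3"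
  proof -
    show "g*y1 = lam*x1" unfolding abc[symmetric] lam_def using c by (simp add: algebra_simps)
    show "g*y2 = lam*x2" unfolding abc[symmetric] lam_def using c by (simp add: algebra_simps)
    show "g*y3 = lam*x3" unfolding abc[symmetric] lam_def using c by (simp add: algebra_simps)
  qed
  define e where "e = gcd g lam"
  have e0: "e > 0" using g0 unfolding e_def by auto
  define k where "k = g div e"
  define l where "l = lam div e"
  have ek: "g = e * k" unfolding k_def e_def by simp
  have el: "lam = e * l" unfolding l_def e_def by simp
  have k1: "k \<ge> 1" using g0 e0 ek by (metis int_one_le_iff_zero_less pos_imp_zdiv_pos_iff k_def zdvd_imp_le e_def gcd_dvd1 )
  have kd: "k dvd x1" "k dvd x2" "k dvd x3" using gd ek by (auto intro: dvd_trans[of k g])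
  have cop: "coprime k l" unfolding k_def l_def e_def using g0 by (intro div_gcd_coprime) auto
  define m where "m = (x1 div k, x2 div k, x3 div k)"
  have scx: "sc k m = (x1,x2,x3)" unfolding m_def sc_def using kd by simp
  have scy: "sc l m = (y1,y2,y3)"
  proof -
    have "k * (l * (x1 div k)) = k * y1" "k * (l * (x2 div k)) = k * y2" "k * (l * (x3 div k)) = k * y3"
    proof -
      have h: "e * (k * yi) = e * (l * xi)" if "g*yi = lam*xi" for yi xi
        using that ek el by (simp add: algebra_simps)
      have "k * (l * (xi div k)) = l * xi" if "k dvd xi" for xi using that by (simp add: algebra_simps)
      then show "k * (l * (x1 div k)) = k * y1" "k * (l * (x2 div k)) = k * y2" "k * (l * (x3 div k)) = k * y3"
        using h[OF gy(1)] h[OF gy(2)] h[OF gy(3)] kd e0 by simp_all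
    qed
    then show ?thesis unfolding m_def sc_def using k1 by simp
  qed
  have m0: "m \<noteq> (0,0,0)" using scx xB(2) sc_zero_iff[of k m] by auto
  have l0: "l \<noteq> 0" using scy yB(2) sc_zero_iff[of l m] by auto
  have bnd: "\<bar>j\<bar> \<le> 2*n" if "sc j m \<in> Bx n" for j
  proof -
    obtain m1 m2 m3 where mm: "m = (m1,m2,m3)" by (metis prod.exhaust)
    have b: "\<bar>j*m1\<bar> \<le> 2*n" "\<bar>j*m2\<bar> \<le> 2*n" "\<bar>j*m3\<bar> \<le> 2*n" using bx_bound that unfolding mm sc_def by auto
    have "m1 \<noteq> 0 \<or> m2 \<noteq> 0 \<or> m3 \<noteq> 0" using m0 mm by auto
    moreover have "\<bar>j\<bar> \<le> \<bar>j*mi\<bar>" if "mi \<noteq> 0" for mi :: int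
    proof -
      have "1 \<le> \<bar>mi\<bar>" using that by linarith
      then show ?thesis by (simp add: abs_mult mult_le_cancel_left1)
    qed
    ultimately show ?thesis using b by force
  qed
  have kn: "k \<le> 2*n" using bnd[of k] scx xB(1) k1 by simp
  have ln: "\<bar>l\<bar> \<le> 2*n" using bnd[of l] scy yB(1) by simp
  have mB: "m \<in> Bx n"
  proof -
    have "\<bar>x1 div k\<bar> \<le> \<bar>x1\<bar>" "\<bar>x2 div k\<bar> \<le> \<bar>x2\<bar>" "\<bar>x3 div k\<bar> \<le> \<bar>x3\<bar>"
    proof -
      have h: "\<bar>t\<bar> \<le> k * \<bar>t\<bar>" for t :: int using k1 by (simp add: mult_le_cancel_right1)
      show "\<bar>x1 div k\<bar> \<le> \<bar>x1\<bar>" "\<bar>x2 div k\<bar> \<le> \<bar>x2\<bar>" "\<bar>x3 div k\<bar> \<le> \<bar>x3\<bar>"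
        using kd k1 h by (auto simp: abs_mult elim!: dvdE)
    qed
    then show ?thesis using xB(1) unfolding m_def Bx_def by auto
  qed
  have "((k,l),m) \<in> Idx n" unfolding Idx_def KL_def using k1 kn ln l0 cop m0 mB scx scy xB yB by auto
  moreover have "phi ((k,l),m) = xy" unfolding phi_def xy' using scx scy by simp
  ultimately show "xy \<in> phi ` Idx n" by force
qed

lemma phi_into: "phi ` Idx n \<subseteq> Par n"
proof
  fix xy assume "xy \<in> phi ` Idx n"
  then obtain k l m where h: "((k,l),m) \<in> Idx n" "xy = (sc k m, sc l m)" unfolding phi_def by force
  then have "k \<noteq> 0" "l \<noteq> 0" "m \<noteq> (0,0,0)" "sc k m \<in> Bx n" "sc l m \<in> Bx n" unfolding Idx_def KL_def by auto
  moreover have "cr (sc k m) (sc l m)" by (cases m) (simp add: cr_def sc_def algebra_simps)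
  ultimately show "xy \<in> Par n" using h(2) unfolding Par_def by (auto simp: sc_zero_iff)
qed

lemma phi_bij: "bij_betw phi (Idx n) (Par n)"
  by (rule bij_betw_imageI[OF phi_inj]) (use phi_surj phi_into in blast)

lemma ww_zero: "n \<ge> 0 \<Longrightarrow> ww n (0,0,0) = 2*n+1"
  by (simp add: ww_def tt_def ch_def)

lemma cr_zero: "cr (0,0,0) y" "cr x (0,0,0)"
  by (cases y, simp add: cr_def) (cases x, simp add: cr_def)

lemma double_sum:
  fixes n :: int
  assumes n: "n \<ge> 0"
  shows "(\<Sum>x\<in>Bx n. \<Sum>y\<in>Bx n. ww n x * ww n y * (if cr x y then 1 else 0))
       = 2*(2*n+1)^5 - (2*n+1)^2 + (\<Sum>(x,y)\<in>Par n. ww n x * ww n y)"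
proof -
  define Z where "Z = ((0::int),(0::int),(0::int))"
  define M where "M = 2*n+1"
  let ?F = "\<lambda>x y. ww n x * ww n y * (if cr x y then 1 else 0)"
  let ?B = "Bx n - {Z}"
  have Zin: "Z \<in> Bx n" unfolding Z_def Bx_def using n by simp
  have wZ: "ww n Z = M" unfolding Z_def M_def using ww_zero[OF n] by simp
  have sw: "(\<Sum>x\<in>Bx n. ww n x) = M^4" unfolding M_def by (rule sum_ww[OF n])
  have sw': "(\<Sum>x\<in>?B. ww n x) = M^4 - M"
    using sum.remove[OF finite_Bx Zin, of "ww n"] sw wZ by simp
  have "(\<Sum>x\<in>Bx n. \<Sum>y\<in>Bx n. ?F x y) = (\<Sum>y\<in>Bx n. ?F Z y) + (\<Sum>x\<in>?B. \<Sum>y\<in>Bx n. ?F x y)"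
    by (rule sum.remove[OF finite_Bx Zin])
  also have "(\<Sum>y\<in>Bx n. ?F Z y) = M * M^4"
  proof -
    have "(\<Sum>y\<in>Bx n. ?F Z y) = (\<Sum>y\<in>Bx n. M * ww n y)"
      by (rule sum.cong) (simp_all add: cr_zero Z_def ww_zero[OF n] M_def)
    also have "\<dots> = M * M^4" by (simp add: sum_distrib_left[symmetric] sw)
    finally show ?thesis .
  qed
  also have "(\<Sum>x\<in>?B. \<Sum>y\<in>Bx n. ?F x y) = (\<Sum>x\<in>?B. ww n x * M + (\<Sum>y\<in>?B. ?F x y))"
  proof (rule sum.cong[OF refl])
    fix x
    show "(\<Sum>y\<in>Bx n. ?F x y) = ww n x * M + (\<Sum>y\<in>?B. ?F x y)"
    proof -
      have "(\<Sum>y\<in>Bx n. ?F x y) = ?F x Z + (\<Sum>y\<in>?B. ?F x y)" by (rule sum.remove[OF finite_Bx Zin])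
      moreover have "?F x Z = ww n x * M" using wZ cr_zero(2)[of x] unfolding Z_def by simp
      ultimately show ?thesis by simp
    qed
  qed
  also have "\<dots> = (\<Sum>x\<in>?B. ww n x * M) + (\<Sum>x\<in>?B. \<Sum>y\<in>?B. ?F x y)"
    by (rule sum.distrib)
  also have "(\<Sum>x\<in>?B. ww n x * M) = (M^4 - M) * M"
    by (simp only: sum_distrib_right[symmetric] sw')
  also have "(\<Sum>x\<in>?B. \<Sum>y\<in>?B. ?F x y) = (\<Sum>(x,y)\<in>Par n. ww n x * ww n y)"
  proof -
    have "(\<Sum>x\<in>?B. \<Sum>y\<in>?B. ?F x y) = (\<Sum>z\<in>?B \<times> ?B. ?F (fst z) (snd z))"
      by (simp add: sum.cartesian_product case_prod_beta)
    also have "\<dots> = (\<Sum>z\<in>?B \<times> ?B. if cr (fst z) (snd z) then ww n (fst z) * ww n (snd z) else 0)"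
      by (rule sum.cong) auto
    also have "\<dots> = (\<Sum>z\<in>{z\<in>?B \<times> ?B. cr (fst z) (snd z)}. ww n (fst z) * ww n (snd z))"
      by (rule sum.inter_filter[symmetric]) (simp add: finite_Bx)
    also have "{z\<in>?B \<times> ?B. cr (fst z) (snd z)} = Par n" unfolding Par_def Z_def by auto
    finally show ?thesis by (simp add: case_prod_beta)
  qed
  finally have "(\<Sum>x\<in>Bx n. \<Sum>y\<in>Bx n. ?F x y) = M * M^4 + ((M^4 - M) * M + (\<Sum>(x,y)\<in>Par n. ww n x * ww n y))" .
  also have "\<dots> = 2*M^5 - M^2 + (\<Sum>(x,y)\<in>Par n. ww n x * ww n y)"
    by (simp add: algebra_simps power2_eq_square power_Suc[symmetric] eval_nat_numeral)
  finally show ?thesis unfolding M_def .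
qed

lemma par_sum:
  fixes n :: int
  shows "(\<Sum>(x,y)\<in>Par n. ww n x * ww n y) = (\<Sum>(k,l)\<in>KL n. XX n k l)"
proof -
  let ?G = "\<lambda>a. ww n (sc (fst (fst a)) (snd a)) * ww n (sc (snd (fst a)) (snd a))"
  have "(\<Sum>(x,y)\<in>Par n. ww n x * ww n y) = (\<Sum>a\<in>Idx n. (\<lambda>(x,y). ww n x * ww n y) (phi a))"
    by (rule sum.reindex_bij_betw[OF phi_bij, symmetric])
  also have "\<dots> = (\<Sum>a\<in>Idx n. ?G a)"
    by (rule sum.cong) (auto simp: phi_def)
  also have "\<dots> = (\<Sum>a\<in>Sigma (KL n) (\<lambda>_. Bx n - {(0,0,0)}). ?G a)"
  proof (rule sum.mono_neutral_left)
    show "finite (Sigma (KL n) (\<lambda>_. Bx n - {(0,0,0)}))" using finite_KL finite_Bx by simp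
    show "Idx n \<subseteq> Sigma (KL n) (\<lambda>_. Bx n - {(0,0,0)})" unfolding Idx_def by auto
    show "\<forall>a\<in>Sigma (KL n) (\<lambda>_. Bx n - {(0,0,0)}) - Idx n. ?G a = 0"
    proof
      fix a assume a: "a \<in> Sigma (KL n) (\<lambda>_. Bx n - {(0,0,0)}) - Idx n"
      obtain k l m where a': "a = ((k,l),m)" by (metis prod.exhaust)
      have "sc k m \<notin> Bx n \<or> sc l m \<notin> Bx n" using a unfolding a' Idx_def by auto
      then have "ww n (sc k m) = 0 \<or> ww n (sc l m) = 0" using ww_out by blast
      then show "?G a = 0" unfolding a' by auto
    qed
  qed
  also have "\<dots> = (\<Sum>(k,l)\<in>KL n. \<Sum>m\<in>Bx n - {(0,0,0)}. ww n (sc k m) * ww n (sc l m))"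
  proof -
    have "(\<Sum>(k,l)\<in>KL n. \<Sum>m\<in>Bx n - {(0,0,0)}. ww n (sc k m) * ww n (sc l m))
        = (\<Sum>z\<in>KL n. \<Sum>m\<in>Bx n - {(0,0,0)}. ?G (z,m))" by (simp add: case_prod_beta)
    also have "\<dots> = (\<Sum>(z,m)\<in>KL n \<times> (Bx n - {(0,0,0)}). ?G (z,m))" by (rule sum.cartesian_product)
    finally show ?thesis by (simp add: case_prod_beta)
  qed
  finally show ?thesis unfolding XX_def .
qed

definition KLp :: "int \<Rightarrow> (int \<times> int) set" where
  "KLp n = {(k,l). k \<in> {1..2*n} \<and> l \<in> {1..2*n} \<and> coprime k l}"

lemma KL_sum:
  fixes n :: int
  shows "(\<Sum>(k,l)\<in>KL n. XX n k l) = 2 * (\<Sum>(k,l)\<in>KLp n. XX n k l)"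
proof -
  define KLm where "KLm = (\<lambda>z. (fst z, - snd z)) ` KLp n"
  have fin: "finite (KLp n)"
  proof -
    have "KLp n \<subseteq> {1..2*n} \<times> {1..2*n}" unfolding KLp_def by auto
    then show ?thesis by (rule finite_subset) simp
  qed
  have split: "KL n = KLp n \<union> KLm"
  proof
    show "KL n \<subseteq> KLp n \<union> KLm"
    proof
      fix z assume z: "z \<in> KL n"
      obtain k l where z': "z = (k,l)" by (cases z) auto
      show "z \<in> KLp n \<union> KLm"
      proof (cases "l > 0")
        case True then show ?thesis using z unfolding z' KL_def KLp_def by auto
      next
        case False
        then have "(k,-l) \<in> KLp n" using z unfolding z' KL_def KLp_def by auto
        then show ?thesis unfolding z' KLm_def by (intro UnI2 image_eqI[where x="(k,-l)"]) auto
      qed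
    qed
    show "KLp n \<union> KLm \<subseteq> KL n" unfolding KLm_def KL_def KLp_def by auto
  qed
  have disj: "KLp n \<inter> KLm = {}" unfolding KLm_def KLp_def by auto
  have "(\<Sum>(k,l)\<in>KL n. XX n k l) = (\<Sum>(k,l)\<in>KLp n. XX n k l) + (\<Sum>(k,l)\<in>KLm. XX n k l)"
    unfolding split by (rule sum.union_disjoint[OF fin]) (use fin disj in \<open>auto simp: KLm_def\<close>)
  also have "(\<Sum>(k,l)\<in>KLm. XX n k l) = (\<Sum>(k,l)\<in>KLp n. XX n k l)"
  proof -
    have "inj_on (\<lambda>z. (fst z, - snd z)) (KLp n)" by (auto simp: inj_on_def prod_eq_iff)
    then have "(\<Sum>(k,l)\<in>KLm. XX n k l) = (\<Sum>z\<in>KLp n. XX n (fst z) (- snd z))"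
      unfolding KLm_def by (simp add: sum.reindex case_prod_beta o_def)
    also have "\<dots> = (\<Sum>(k,l)\<in>KLp n. XX n k l)" by (rule sum.cong) (auto simp: XX_neg)
    finally show ?thesis .
  qed
  finally show ?thesis by simp
qed

lemma KLp_nat:
  fixes N :: nat
  shows "(\<Sum>(k,l)\<in>KLp (int N). XX (int N) k l) = (\<Sum>(k,l)\<in>Cop \<inter> {(k,l). max k l \<le> 2*N}. XX (int N) (int k) (int l))"
proof -
  have e: "KLp (int N) = (\<lambda>z. (int (fst z), int (snd z))) ` (Cop \<inter> {(k,l). max k l \<le> 2*N})"
  proof
    show "KLp (int N) \<subseteq> (\<lambda>z. (int (fst z), int (snd z))) ` (Cop \<inter> {(k,l). max k l \<le> 2*N})"
    proof
      fix z assume z: "z \<in> KLp (int N)"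
      obtain k l where z': "z = (k,l)" by (cases z) auto
      have h: "1 \<le> k" "k \<le> 2 * int N" "1 \<le> l" "l \<le> 2 * int N" "coprime k l" using z unfolding z' KLp_def by auto
      have "coprime (int (nat k)) (int (nat l))" using h by simp
      then have "coprime (nat k) (nat l)" by (simp only: coprime_int_iff)
      then have "(nat k, nat l) \<in> Cop \<inter> {(k,l). max k l \<le> 2*N}"
        using h unfolding Cop_def by auto
      moreover have "z = (\<lambda>z. (int (fst z), int (snd z))) (nat k, nat l)" using h unfolding z' by simp
      ultimately show "z \<in> (\<lambda>z. (int (fst z), int (snd z))) ` (Cop \<inter> {(k,l). max k l \<le> 2*N})" by blast
    qed
    show "(\<lambda>z. (int (fst z), int (snd z))) ` (Cop \<inter> {(k,l). max k l \<le> 2*N}) \<subseteq> KLp (int N)"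
      unfolding Cop_def KLp_def by (auto simp: coprime_int_iff)
  qed
  have inj: "inj_on (\<lambda>z. (int (fst z), int (snd z))) (Cop \<inter> {(k,l). max k l \<le> 2*N})" by (auto simp: inj_on_def prod_eq_iff)
  show ?thesis unfolding e sum.reindex[OF inj] by (simp add: case_prod_beta o_def)
qed

lemma count_formula:
  fixes N :: nat
  shows "real (commuting_count TYPE(2) N) = 2*(2*real N+1)^5 - (2*real N+1)^2
          + 2 * (\<Sum>(k,l)\<in>Cop \<inter> {(k,l). max k l \<le> 2*N}. real_of_int (XX (int N) (int k) (int l)))"
proof -
  have n0: "int N \<ge> 0" by simp
  have "int (commuting_count TYPE(2) N) = 2*(2*int N+1)^5 - (2*int N+1)^2
          + 2 * (\<Sum>(k,l)\<in>Cop \<inter> {(k,l). max k l \<le> 2*N}. XX (int N) (int k) (int l))"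
    unfolding count_sum double_sum[OF n0] par_sum KL_sum KLp_nat by simp
  then have "real_of_int (int (commuting_count TYPE(2) N)) = real_of_int (2*(2*int N+1)^5 - (2*int N+1)^2
          + 2 * (\<Sum>(k,l)\<in>Cop \<inter> {(k,l). max k l \<le> 2*N}. XX (int N) (int k) (int l)))"
    by simp
  then show ?thesis by (simp add: of_int_sum case_prod_beta)
qed

lemma ln2_bounds: "1/2 \<le> ln (2::real)" "ln (2::real) \<le> 1"
proof -
  have "ln (1/2::real) \<le> 1/2 - 1" by (rule ln_le_minus_one) simp
  moreover have "ln (1/2::real) = - ln 2" by (simp add: ln_div)
  ultimately show "1/2 \<le> ln (2::real)" by simp
  have "ln (2::real) \<le> 2 - 1" by (rule ln_le_minus_one) simp
  then show "ln (2::real) \<le> 1" by simp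
qed

lemma fifth_diff: "(x::real) \<ge> 1 \<Longrightarrow> 0 \<le> (x+1)^5 - x^5 \<and> (x+1)^5 - x^5 \<le> 31 * x^4"
proof -
  assume x: "x \<ge> 1"
  have e: "(x+1)^5 - x^5 = 5*x^4 + 10*x^3 + 10*x^2 + 5*x + 1" by (simp add: algebra_simps eval_nat_numeral)
  have p1: "x^1 \<le> x^2" by (rule power_increasing) (use x in auto)
  have p2: "x^2 \<le> x^3" by (rule power_increasing) (use x in auto)
  have p3: "x^3 \<le> x^4" by (rule power_increasing) (use x in auto)
  show ?thesis unfolding e using p1 p2 p3 x by simp
qed

lemma lin_comb:
  fixes D a m b t c E d :: real
  assumes "0 \<le> D" "D \<le> a" "0 \<le> m" "m \<le> b" "0 \<le> t" "t \<le> c" "2*\<bar>E\<bar> \<le> d"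
  shows "\<bar>2*D - m + 2*E - t\<bar> \<le> 2*a + b + d + c"
  using assms unfolding abs_le_iff by linarith

theorem theorem1p2:
  shows "\<exists>C. \<forall>N::nat. N > 1 \<longrightarrow>
    \<bar>real (commuting_count TYPE(2) N)
       - (10 * zeta_real 2 / (3 * zeta_real 3)) * (2 * real N) ^ 5\<bar>
      \<le> C * real N ^ 4 * ln (real N)"
proof (intro exI allI impI)
  fix N :: nat assume N: "N > 1"
  define A where "A = Cop \<inter> {(k,l). max k l \<le> 2*N}"
  define SX where "SX = (\<Sum>(k,l)\<in>A. real_of_int (XX (int N) (int k) (int l)))"
  define SF where "SF = (\<Sum>(k,l)\<in>A. fk k l)"
  define x where "x = real N"
  define L where "L = ln x"
  have x2: "x \<ge> 2" unfolding x_def using N by simp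
  have L2: "ln 2 \<le> L" unfolding L_def using x2 by simp
  have L1: "1 \<le> 2 * L" using L2 ln2_bounds by simp
  have x4: "x^4 \<ge> 0" by simp
  have finA: "finite A"
  proof -
    have "A \<subseteq> {0..2*N} \<times> {0..2*N}" unfolding A_def by auto
    then show ?thesis by (rule finite_subset) simp
  qed
  have cnt: "real (commuting_count TYPE(2) N) = 2*(2*x+1)^5 - (2*x+1)^2 + 2 * SX"
    unfolding SX_def A_def x_def by (rule count_formula)
  have K: "10 * zeta_real 2 / (3 * zeta_real 3) = 2 * (Scop + 1)"
    using Scop_eq z3_pos unfolding z2_def z3_def by (simp add: field_simps)
  have err1: "\<bar>SX - (2*x)^5 * SF\<bar> \<le> 1200 * x^4 * harm (2*N)"
  proof -
    have "\<bar>SX - (2*x)^5 * SF\<bar> = \<bar>\<Sum>(k,l)\<in>A. real_of_int (XX (int N) (int k) (int l)) - (2*x)^5 * fk k l\<bar>"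
      unfolding SX_def SF_def by (simp add: sum_subtractf sum_distrib_left case_prod_beta)
    also have "\<dots> \<le> (\<Sum>(k,l)\<in>A. \<bar>real_of_int (XX (int N) (int k) (int l)) - (2*x)^5 * fk k l\<bar>)"
      by (rule order_trans[OF sum_abs]) (simp add: case_prod_beta)
    also have "\<dots> \<le> (\<Sum>(k,l)\<in>A. 600 * x^4 / real (max k l)^2)"
    proof (rule sum_mono)
      fix z assume z: "z \<in> A"
      obtain k l where z': "z = (k,l)" by (cases z) auto
      have "1 \<le> k" "1 \<le> l" "int (max k l) \<le> 2 * int N" using z unfolding z' A_def Cop_def by auto
      then show "(\<lambda>(k,l). \<bar>real_of_int (XX (int N) (int k) (int l)) - (2*x)^5 * fk k l\<bar>) z
          \<le> (\<lambda>(k,l). 600 * x^4 / real (max k l)^2) z"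
        using XX_est[of "int N" k l] N unfolding z' x_def by simp
    qed
    also have "\<dots> \<le> (\<Sum>(k,l)\<in>{1..2*N}\<times>{1..2*N}. 600 * x^4 / real (max k l)^2)"
      by (rule sum_mono2) (auto simp: A_def Cop_def)
    also have "\<dots> = 600 * x^4 * (\<Sum>(k,l)\<in>{1..2*N}\<times>{1..2*N}. 1 / real (max k l)^2)"
      by (simp add: sum_distrib_left case_prod_beta)
    also have "\<dots> \<le> 600 * x^4 * (2 * harm (2*N))"
      by (rule mult_left_mono[OF box_inv_sq]) simp
    finally show ?thesis by simp
  qed
  have err2: "0 \<le> Scop - SF" "Scop - SF \<le> 5 / (3 * real (2*N))"
    using Scop_split[of "2*N"] N unfolding SF_def A_def by auto
  have hb: "harm (2*N) \<le> 1 + ln 2 + L"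
  proof -
    have "harm (2*N) \<le> 1 + ln (real (2*N))" by (rule harm_le_ln) (use N in simp)
    also have "ln (real (2*N)) = ln 2 + L" unfolding L_def x_def using N by (simp add: ln_mult)
    finally show ?thesis by simp
  qed
  have b1: "0 \<le> (2*x+1)^5 - (2*x)^5" "(2*x+1)^5 - (2*x)^5 \<le> 496 * x^4"
    using fifth_diff[of "2*x"] x2 by (simp_all add: power_mult_distrib)
  have b2: "(2*x+1)^2 \<le> 9 * x^4"
  proof -
    have "(2*x+1)^2 \<le> (3*x)^2" using x2 by (intro power_mono) auto
    also have "\<dots> = 9 * x^2 * 1" by (simp add: power2_eq_square)
    also have "\<dots> \<le> 9 * x^2 * x^2"
    proof -
      have "1*1 \<le> x*x" using x2 by (intro mult_mono) auto
      then show ?thesis by (intro mult_left_mono) (auto simp: power2_eq_square)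
    qed
    finally show ?thesis by (simp add: power2_eq_square eval_nat_numeral)
  qed
  have b3: "2 * (2*x)^5 * (Scop - SF) \<le> 54 * x^4"
  proof -
    have "2 * (2*x)^5 * (Scop - SF) \<le> 2 * (2*x)^5 * (5 / (3 * (2*x)))"
      using err2 x2 unfolding x_def by (intro mult_left_mono) auto
    also have "\<dots> = 160/3 * x^4" using x2 by (simp add: field_simps eval_nat_numeral)
    finally have "2 * (2*x)^5 * (Scop - SF) \<le> 160/3 * x^4" .
    then show ?thesis using x4 by linarith
  qed
  have b4: "2 * \<bar>SX - (2*x)^5 * SF\<bar> \<le> 2400 * x^4 * (1 + ln 2 + L)"
  proof -
    have "2 * \<bar>SX - (2*x)^5 * SF\<bar> \<le> 2400 * x^4 * harm (2*N)" using err1 by (simp add: mult_ac)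
    also have "\<dots> \<le> 2400 * x^4 * (1 + ln 2 + L)" using hb by (intro mult_left_mono) auto
    finally show ?thesis .
  qed
  have decomp: "real (commuting_count TYPE(2) N) - (10 * zeta_real 2 / (3 * zeta_real 3)) * (2 * x)^5
      = 2*((2*x+1)^5 - (2*x)^5) - (2*x+1)^2 + 2*(SX - (2*x)^5 * SF) - 2 * (2*x)^5 * (Scop - SF)"
    unfolding cnt K by (simp add: algebra_simps)
  have tot: "\<bar>real (commuting_count TYPE(2) N) - (10 * zeta_real 2 / (3 * zeta_real 3)) * (2 * x)^5\<bar>
      \<le> 992 * x^4 + 9 * x^4 + 2400 * x^4 * (1 + ln 2 + L) + 54 * x^4"
  proof -
    have m2: "0 \<le> (2*x+1)^2" by simp
    have b3': "0 \<le> 2 * (2*x)^5 * (Scop - SF)" using err2 x2 by simp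
    have ea: "SX - (2*x)^5 * SF \<le> \<bar>SX - (2*x)^5 * SF\<bar>" "-(SX - (2*x)^5 * SF) \<le> \<bar>SX - (2*x)^5 * SF\<bar>" by simp_all
    have "\<bar>2*((2*x+1)^5 - (2*x)^5) - (2*x+1)^2 + 2*(SX - (2*x)^5 * SF) - 2 * (2*x)^5 * (Scop - SF)\<bar>
       \<le> 2*(496 * x^4) + 9 * x^4 + 2400 * x^4 * (1 + ln 2 + L) + 54 * x^4"
      by (rule lin_comb[OF b1(1) b1(2) m2 b2 b3' b3 b4])
    then show ?thesis unfolding decomp by simp
  qed
  also have "\<dots> \<le> 20000 * x^4 * L"
  proof -
    have "1 + ln 2 + L \<le> 5 * L" using L1 ln2_bounds by simp
    then have e1: "2400 * x^4 * (1 + ln 2 + L) \<le> 2400 * x^4 * (5 * L)" using x4 by (intro mult_left_mono) auto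
    have e2: "1055 * x^4 * 1 \<le> 1055 * x^4 * (2 * L)" using L1 x4 by (intro mult_left_mono) auto
    have Lx: "0 \<le> L * x^4" using L1 x4 by simp
    show ?thesis using e1 e2 Lx by (simp add: algebra_simps)
  qed
  finally show "\<bar>real (commuting_count TYPE(2) N) - (10 * zeta_real 2 / (3 * zeta_real 3)) * (2 * real N) ^ 5\<bar>
      \<le> 20000 * real N ^ 4 * ln (real N)" unfolding x_def L_def .
qed

end
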